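(* Fix an integer $k\ge0$. Let $w$ be a weight, $f\in L^1_{loc}(\mathbb{R}^n)$, $Q$ a cube, $1<r<\infty$ and $1\le p<\infty$. Then \[ \left(\frac1{w_r(Q)}\int_Q\left(\frac{M_Q(f-P_Qf)(x)}{M_k^\sharp f(x)}\right)^pw(x)\,dx\right)^{1/p}\le c_n\,r'\,\gamma\,p, \] where $c_n$ depends only on $n$ and $\gamma$ is the constant (depending only on $n$ and $k$) in the estimate $|P_Rg(x)|\le\gamma\frac1{|R|}\int_R|g|$ valid for all cubes $R$, all $g\in L^1(R)$ and $x\in R$.
   Context: For a cube $R$, $P_R$ denotes the orthogonal projection, with respect to the inner product $\langle f,g\rangle_R=\frac1{|R|}\int_Rf\bar g$, onto the space of polynomials of degree at most $k$ restricted to $R$; i.e. $P_Rf=\sum_j\langle f,e_{j,R}\rangle_Re_{j,R}$ for an orthonormal basis $\{e_{j,R}\}$ of that space, obtained by translating and dilating a fixed orthonormal basis for $[0,1]^n$; this formula defines $P_R$ on all of $L^1(R)$, and there is $\gamma=\gamma(n,k)$ with $|P_Rg(x)|\le\gamma\frac1{|R|}\int_R|g|$. The polynomial sharp maximal function is $M_k^\sharp f(x)=\sup_{R\ni x}\frac1{|R|}\int_R|f-P_Rf|$ over cubes $R$ containing $x$. $w_r(Q)=|Q|\left(\frac1{|Q|}\int_Qw^r\right)^{1/r}$, $r'=r/(r-1)$. $M_Qh(x)=\sup_{R\in\mathcal D(Q),x\in R}\frac1{|R|}\int_R|h|$, where $\mathcal D(Q)$ is the set of dyadic descendants of $Q$.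 A weight is a non-negative locally integrable function. *)

theory Defs
  imports "HOL-Analysis.Analysis"
begin

text \<open>Power of an extended non-negative real by a positive real exponent
  (only used with positive exponents): top stays top.\<close>
definition epowr :: "ennreal \<Rightarrow> real \<Rightarrow> ennreal" where
  "epowr x q = (if x = top then top else ennreal (enn2real x powr q))"

definition cubes :: "(real ^ 'n) set set" where
  "cubes = {cbox a (a + h *\<^sub>R One) | a h. h > 0}"

definition dyadic_desc :: "(real ^ 'n) set \<Rightarrow> (real ^ 'n) set set" where
  "dyadic_desc Q = {cbox (a + (h / 2 ^ j) *\<^sub>R (\<chi> i. real (m i)))
                         (a + (h / 2 ^ j) *\<^sub>R (\<chi> i. real (m i) + 1))
                    | a h j m. h > 0 \<and> Q = cbox a (a + h *\<^sub>R One)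
                               \<and> (\<forall>i. m i < (2::nat) ^ j)}"

definition polys :: "nat \<Rightarrow> (real ^ 'n \<Rightarrow> complex) set" where
  "polys k = {p. \<exists>c :: ('n \<Rightarrow> nat) \<Rightarrow> complex.
     p = (\<lambda>x. \<Sum>\<alpha>\<in>{\<alpha>. sum \<alpha> UNIV \<le> k}. c \<alpha> * complex_of_real (\<Prod>i\<in>UNIV. (x $ i) ^ \<alpha> i))}"

text \<open>Orthogonal projection P_R f of f onto polys k, with respect to the inner product
  of L^2(R) (normalisation by |R| is irrelevant for orthogonality).  For f in L^1(R)
  this is the unique polynomial p of degree at most k with f - p orthogonal to all of them.\<close>
definition proj :: "nat \<Rightarrow> (real ^ 'n) set \<Rightarrow> (real ^ 'n \<Rightarrow> complex) \<Rightarrow> (real ^ 'n \<Rightarrow> complex)" where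
  "proj k R f = (THE p. p \<in> polys k \<and>
      (\<forall>q \<in> polys k. (LINT x:R|lborel. (f x - p x) * cnj (q x)) = 0))"

definition avg :: "(real ^ 'n) set \<Rightarrow> (real ^ 'n \<Rightarrow> complex) \<Rightarrow> ennreal" where
  "avg R g = (\<integral>\<^sup>+ y\<in>R. ennreal (norm (g y)) \<partial>lborel) / emeasure lborel R"

definition sharp_max :: "nat \<Rightarrow> (real ^ 'n \<Rightarrow> complex) \<Rightarrow> real ^ 'n \<Rightarrow> ennreal" where
  "sharp_max k f x = (SUP R \<in> {R \<in> cubes. x \<in> R}. avg R (\<lambda>y. f y - proj k R f y))"

definition dyadic_max :: "(real ^ 'n) set \<Rightarrow> (real ^ 'n \<Rightarrow> complex) \<Rightarrow> real ^ 'n \<Rightarrow> ennreal" where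
  "dyadic_max Q h x = (SUP R \<in> {R \<in> dyadic_desc Q. x \<in> R}. avg R h)"

definition w_r :: "real \<Rightarrow> (real ^ 'n \<Rightarrow> real) \<Rightarrow> (real ^ 'n) set \<Rightarrow> ennreal" where
  "w_r r w Q = emeasure lborel Q *
     epowr ((\<integral>\<^sup>+ x\<in>Q. ennreal (w x powr r) \<partial>lborel) / emeasure lborel Q) (1 / r)"

definition weight :: "(real ^ 'n \<Rightarrow> real) \<Rightarrow> bool" where
  "weight w \<longleftrightarrow> w \<in> borel_measurable lborel \<and> (\<forall>x. 0 \<le> w x) \<and>
     (\<forall>K. compact K \<longrightarrow> set_integrable lborel K w)"

definition loc_integrable :: "(real ^ 'n \<Rightarrow> complex) \<Rightarrow> bool" where
  "loc_integrable f \<longleftrightarrow> f \<in> borel_measurable lborel \<and>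
     (\<forall>K. compact K \<longrightarrow> set_integrable lborel K f)"

end

theory Submission
  imports Defs "HOL-Computational_Algebra.Polynomial"
begin

definition mon :: "('n::finite \<Rightarrow> nat) \<Rightarrow> real ^ 'n \<Rightarrow> complex" where
  "mon \<alpha> x = complex_of_real (\<Prod>i\<in>UNIV. (x $ i) ^ \<alpha> i)"

definition midx :: "nat \<Rightarrow> ('n::finite \<Rightarrow> nat) set" where
  "midx k = {\<alpha>. sum \<alpha> UNIV \<le> k}"

lemma finite_midx: "finite (midx k :: ('n::finite \<Rightarrow> nat) set)"
proof -
  have "midx k \<subseteq> PiE UNIV (\<lambda>_::'n. {..k})"
    unfolding midx_def
  proof (rule subsetI)
    fix \<alpha> :: "'n \<Rightarrow> nat" assume "\<alpha> \<in> {\<alpha>. sum \<alpha> UNIV \<le> k}"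
    then have "sum \<alpha> UNIV \<le> k" by simp
    moreover have "\<alpha> i \<le> sum \<alpha> UNIV" for i by (rule member_le_sum) auto
    ultimately have "\<forall>i. \<alpha> i \<le> k" using le_trans by blast
    then show "\<alpha> \<in> PiE UNIV (\<lambda>_. {..k})" by (auto simp: PiE_iff)
  qed
  then show ?thesis by (rule finite_subset) (intro finite_PiE, auto)
qed

lemma polys_iff: "p \<in> polys k \<longleftrightarrow> (\<exists>c. p = (\<lambda>x. \<Sum>\<alpha>\<in>midx k. c \<alpha> * mon \<alpha> x))"
  unfolding polys_def midx_def mon_def by auto

lemma polysI: "p = (\<lambda>x. \<Sum>\<alpha>\<in>midx k. c \<alpha> * mon \<alpha> x) \<Longrightarrow> p \<in> polys k"
  using polys_iff by blast

lemma polys_diff: "p \<in> polys k \<Longrightarrow> q \<in> polys k \<Longrightarrow> (\<lambda>x. p x - q x) \<in> polys k"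
proof -
  assume "p \<in> polys k" "q \<in> polys k"
  then obtain c d where "p = (\<lambda>x. \<Sum>\<alpha>\<in>midx k. c \<alpha> * mon \<alpha> x)" "q = (\<lambda>x. \<Sum>\<alpha>\<in>midx k. d \<alpha> * mon \<alpha> x)"
    unfolding polys_iff by blast
  then show ?thesis
    by (intro polysI[where c="\<lambda>\<alpha>. c \<alpha> - d \<alpha>"]) (auto simp: sum_subtractf algebra_simps)
qed

lemma polys_add: "p \<in> polys k \<Longrightarrow> q \<in> polys k \<Longrightarrow> (\<lambda>x. p x + q x) \<in> polys k"
proof -
  assume "p \<in> polys k" "q \<in> polys k"
  then obtain c d where "p = (\<lambda>x. \<Sum>\<alpha>\<in>midx k. c \<alpha> * mon \<alpha> x)" "q = (\<lambda>x. \<Sum>\<alpha>\<in>midx k. d \<alpha> * mon \<alpha> x)"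
    unfolding polys_iff by blast
  then show ?thesis
    by (intro polysI[where c="\<lambda>\<alpha>. c \<alpha> + d \<alpha>"]) (auto simp: sum.distrib algebra_simps)
qed

lemma polys_scale: "p \<in> polys k \<Longrightarrow> (\<lambda>x. a * p x) \<in> polys k"
proof -
  assume "p \<in> polys k"
  then obtain c where "p = (\<lambda>x. \<Sum>\<alpha>\<in>midx k. c \<alpha> * mon \<alpha> x)"
    unfolding polys_iff by blast
  then show ?thesis
    by (intro polysI[where c="\<lambda>\<alpha>. a * c \<alpha>"]) (auto simp: sum_distrib_left algebra_simps)
qed

lemma ifmult: "(if b then (y::complex) else 0) * z = (if b then y * z else 0)" by simp

lemma polys_const: "(\<lambda>x. a) \<in> polys k"
proof (rule polysI[where c="\<lambda>\<alpha>. if \<alpha> = (\<lambda>_. 0) then a else 0"])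
  have "(\<lambda>_. 0) \<in> midx k" by (simp add: midx_def)
  then show "(\<lambda>x. a) = (\<lambda>x. \<Sum>\<alpha>\<in>midx k. (if \<alpha> = (\<lambda>_. 0) then a else 0) * mon \<alpha> x)"
    by (simp only: ifmult sum.delta finite_midx) (simp add: mon_def midx_def)
qed

lemma polys_mon: "\<alpha> \<in> midx k \<Longrightarrow> mon \<alpha> \<in> polys k"
proof (rule polysI[where c="\<lambda>\<beta>. if \<beta> = \<alpha> then 1 else 0"])
  assume "\<alpha> \<in> midx k"
  then show "mon \<alpha> = (\<lambda>x. \<Sum>\<beta>\<in>midx k. (if \<beta> = \<alpha> then 1 else 0) * mon \<beta> x)"
    by (simp only: ifmult sum.delta finite_midx) simp
qed

lemma continuous_mon: "continuous_on S (mon \<alpha>)"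
  unfolding mon_def by (intro continuous_intros)

lemma polys_continuous: "p \<in> polys k \<Longrightarrow> continuous_on S p"
  unfolding polys_iff by (auto intro!: continuous_intros continuous_mon[THEN continuous_on_compose2[of UNIV]])

lemma polys_zero_ball:
  assumes "p \<in> polys k" "e > 0" "\<forall>x\<in>ball x0 e. p x = 0"
  shows "p y = 0"
proof -
  obtain c where p: "p = (\<lambda>x. \<Sum>\<alpha>\<in>midx k. c \<alpha> * mon \<alpha> x)"
    using assms(1) unfolding polys_iff by blast
  define d where "d = y - x0"
  define P where "P = (\<Sum>\<alpha>\<in>midx k. smult (c \<alpha>)
     (\<Prod>i\<in>UNIV. [:complex_of_real (x0$i), complex_of_real (d$i):] ^ \<alpha> i))"
  have ev: "poly P (complex_of_real t) = p (x0 + t *\<^sub>R d)" for t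
    by (simp add: P_def p poly_sum poly_prod mon_def algebra_simps)
  have "P = 0"
  proof (rule ccontr)
    assume "P \<noteq> 0"
    then have fin: "finite {z. poly P z = 0}" by (rule poly_roots_finite)
    have nd: "0 < norm d + 1" using norm_ge_zero[of d] by linarith
    define e' where "e' = e / (norm d + 1)"
    have e': "e' > 0" unfolding e'_def using assms(2) using nd by (intro divide_pos_pos)
    have "complex_of_real ` {0<..<e'} \<subseteq> {z. poly P z = 0}"
    proof safe
      fix t assume t: "t \<in> {0<..<e'}"
      have "norm d * t \<le> (norm d + 1) * t" using t by (intro mult_right_mono) auto
      also have "\<dots> < (norm d + 1) * e'" using t nd by (intro mult_strict_left_mono) auto
      also have "\<dots> = e" using nd by (simp add: e'_def)
      finally have "dist x0 (x0 + t *\<^sub>R d) < e" using t by (simp add: dist_norm mult.commute)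
      then show "poly P (complex_of_real t) = 0" using assms(3) ev by simp
    qed
    moreover have "infinite (complex_of_real ` {0<..<e'})"
      using e' by (subst finite_image_iff) (auto simp: inj_on_def)
    ultimately show False using fin finite_subset by blast
  qed
  then have "p (x0 + 1 *\<^sub>R d) = 0" using ev[of 1] by simp
  then show ?thesis by (simp add: d_def)
qed

definition ip :: "'a measure \<Rightarrow> ('a \<Rightarrow> complex) \<Rightarrow> ('a \<Rightarrow> complex) \<Rightarrow> complex" where
  "ip M u v = (\<integral>x. u x * cnj (v x) \<partial>M)"

definition Bd :: "'a measure \<Rightarrow> ('a \<Rightarrow> complex) \<Rightarrow> bool" where
  "Bd M v \<longleftrightarrow> v \<in> borel_measurable M \<and> (\<exists>B. \<forall>x\<in>space M. norm (v x) \<le> B)"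

lemma meas_cnj[measurable]: "v \<in> borel_measurable M \<Longrightarrow> (\<lambda>x. cnj (v x)) \<in> borel_measurable M"
  by (erule measurable_compose[OF _ borel_measurable_continuous_onI]) (intro continuous_intros)

lemma int_prod:
  assumes "integrable M u" "Bd M v"
  shows "integrable M (\<lambda>x. u x * cnj (v x))"
proof -
  obtain B where B: "\<forall>x\<in>space M. norm (v x) \<le> B" and vm: "v \<in> borel_measurable M"
    using assms(2) unfolding Bd_def by blast
  have i: "integrable M (\<lambda>x. B * norm (u x))" using assms(1) by auto
  have ae: "AE x in M. norm (u x * cnj (v x)) \<le> norm (B * norm (u x))"
  proof (rule AE_I2)
    fix x assume x: "x \<in> space M"
    have "norm (u x * cnj (v x)) = norm (u x) * norm (v x)" by (simp add: norm_mult)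
    also have "\<dots> \<le> norm (u x) * B" using B x by (intro mult_left_mono) auto
    also have "\<dots> \<le> norm (B * norm (u x))" by (simp add: mult.commute)
    finally show "norm (u x * cnj (v x)) \<le> norm (B * norm (u x))" .
  qed
  have me: "(\<lambda>x. u x * cnj (v x)) \<in> borel_measurable M"
    using assms(1) vm by measurable
  show ?thesis by (rule Bochner_Integration.integrable_bound[OF i me ae])
qed

lemma Bd_int: "finite_measure M \<Longrightarrow> Bd M v \<Longrightarrow> integrable M v"
  unfolding Bd_def
  by (auto intro!: finite_measure.integrable_const_bound[where B=B for B] simp: )

lemma Bd_diff: "Bd M u \<Longrightarrow> Bd M v \<Longrightarrow> Bd M (\<lambda>x. u x - v x)"
proof -
  assume "Bd M u" "Bd M v"
  then obtain A B where "\<forall>x\<in>space M. norm (u x) \<le> A" "\<forall>x\<in>space M. norm (v x) \<le> B"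
    "u \<in> borel_measurable M" "v \<in> borel_measurable M" unfolding Bd_def by blast
  then show ?thesis unfolding Bd_def
    by (intro conjI exI[of _ "A + B"]) (auto intro!: norm_triangle_ineq4[THEN order_trans] add_mono)
qed

lemma Bd_scale: "Bd M u \<Longrightarrow> Bd M (\<lambda>x. a * u x)"
proof -
  assume "Bd M u"
  then obtain A where "\<forall>x\<in>space M. norm (u x) \<le> A" "u \<in> borel_measurable M" unfolding Bd_def by blast
  then show ?thesis unfolding Bd_def
    by (intro conjI exI[of _ "norm a * A"]) (auto simp: norm_mult intro!: mult_left_mono)
qed

lemma Bd_sum: "finite S \<Longrightarrow> (\<And>\<alpha>. \<alpha> \<in> S \<Longrightarrow> Bd M (m \<alpha>)) \<Longrightarrow> Bd M (\<lambda>x. \<Sum>\<alpha>\<in>S. c \<alpha> * m \<alpha> x)"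
proof (induction S rule: finite_induct)
  case empty
  then show ?case by (auto simp: Bd_def)
next
  case (insert b S)
  have "Bd M (\<lambda>x. c b * m b x)" using insert by (intro Bd_scale) auto
  moreover have "Bd M (\<lambda>x. \<Sum>\<alpha>\<in>S. c \<alpha> * m \<alpha> x)" using insert by auto
  ultimately have "Bd M (\<lambda>x. c b * m b x - - (\<Sum>\<alpha>\<in>S. c \<alpha> * m \<alpha> x))"
    using Bd_diff Bd_scale[of M _ "-1"] by fastforce
  then show ?case using insert by simp
qed

lemma ip_diff_left: "integrable M u \<Longrightarrow> integrable M v \<Longrightarrow> Bd M w \<Longrightarrow>
  ip M (\<lambda>x. u x - v x) w = ip M u w - ip M v w"
  unfolding ip_def by (simp add: left_diff_distrib int_prod)

lemma ip_add_right: "integrable M u \<Longrightarrow> Bd M v \<Longrightarrow> Bd M w \<Longrightarrow>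
  ip M u (\<lambda>x. v x + w x) = ip M u v + ip M u w"
  unfolding ip_def by (simp add: distrib_left int_prod)

lemma ip_scale_left: "ip M (\<lambda>x. a * u x) w = a * ip M u w"
  unfolding ip_def by (simp add: mult.assoc)

lemma ip_sum_right: "finite S \<Longrightarrow> integrable M u \<Longrightarrow> (\<And>\<alpha>. \<alpha> \<in> S \<Longrightarrow> Bd M (m \<alpha>)) \<Longrightarrow>
  ip M u (\<lambda>x. \<Sum>\<alpha>\<in>S. c \<alpha> * m \<alpha> x) = (\<Sum>\<alpha>\<in>S. cnj (c \<alpha>) * ip M u (m \<alpha>))"
proof -
  assume S: "finite S" and u: "integrable M u" and m: "\<And>\<alpha>. \<alpha> \<in> S \<Longrightarrow> Bd M (m \<alpha>)"
  have "ip M u (\<lambda>x. \<Sum>\<alpha>\<in>S. c \<alpha> * m \<alpha> x) = (\<integral>x. (\<Sum>\<alpha>\<in>S. cnj (c \<alpha>) * (u x * cnj (m \<alpha> x))) \<partial>M)"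
    unfolding ip_def by (simp add: sum_distrib_left algebra_simps)
  also have "\<dots> = (\<Sum>\<alpha>\<in>S. cnj (c \<alpha>) * ip M u (m \<alpha>))"
    unfolding ip_def using int_prod[OF u m] by (subst Bochner_Integration.integral_sum) (auto intro!: sum.cong)
  finally show ?thesis .
qed

lemma ip_self_zero:
  assumes "Bd M u" "finite_measure M" "ip M u u = 0"
  shows "AE x in M. u x = 0"
proof -
  have i: "integrable M (\<lambda>x. u x * cnj (u x))" using assms by (intro int_prod Bd_int)
  have eq: "u x * cnj (u x) = complex_of_real ((norm (u x))^2)" for x
    by (metis complex_norm_square of_real_power)
  have "integrable M (\<lambda>x. (norm (u x))^2)"
  proof -
    have "integrable M (\<lambda>x. Re (u x * cnj (u x)))" using i by (rule integrable_Re)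
    then show ?thesis by (simp add: eq)
  qed
  moreover have "integral\<^sup>L M (\<lambda>x. (norm (u x))^2) = 0"
  proof -
    have "ip M u u = complex_of_real (integral\<^sup>L M (\<lambda>x. (norm (u x))^2))"
      unfolding ip_def eq by (rule integral_complex_of_real)
    then have "complex_of_real (integral\<^sup>L M (\<lambda>x. (norm (u x))^2)) = 0"
      using assms(3) by simp
    then show ?thesis by simp
  qed
  ultimately have "AE x in M. (norm (u x))^2 = 0"
    by (subst integral_nonneg_eq_0_iff_AE[symmetric]) auto
  then show ?thesis by auto
qed

lemma ip_AE_zero: "AE x in M. u x = 0 \<Longrightarrow> ip M v u = 0"
  unfolding ip_def by (subst integral_eq_zero_AE) (auto elim: AE_mp)

lemma gram_schmidt:
  assumes M: "finite_measure M" and S: "finite S" and m: "\<And>\<alpha>. \<alpha> \<in> S \<Longrightarrow> Bd M (m \<alpha>)"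
  shows "integrable M g \<Longrightarrow> \<exists>c. \<forall>\<beta>\<in>S. ip M (\<lambda>x. g x - (\<Sum>\<alpha>\<in>S. c \<alpha> * m \<alpha> x)) (m \<beta>) = 0"
  using S m
proof (induction S arbitrary: g rule: finite_induct)
  case empty
  then show ?case by simp
next
  case (insert b S)
  have mS: "\<And>\<alpha>. \<alpha> \<in> S \<Longrightarrow> Bd M (m \<alpha>)" and mb: "Bd M (m b)" using insert by auto
  obtain c1 where c1: "\<forall>\<beta>\<in>S. ip M (\<lambda>x. g x - (\<Sum>\<alpha>\<in>S. c1 \<alpha> * m \<alpha> x)) (m \<beta>) = 0"
    using insert.IH[OF insert.prems(1) mS] by blast
  obtain c2 where c2: "\<forall>\<beta>\<in>S. ip M (\<lambda>x. m b x - (\<Sum>\<alpha>\<in>S. c2 \<alpha> * m \<alpha> x)) (m \<beta>) = 0"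
    using insert.IH[OF Bd_int[OF M mb] mS] by blast
  define r where "r = (\<lambda>x. g x - (\<Sum>\<alpha>\<in>S. c1 \<alpha> * m \<alpha> x))"
  define q where "q = (\<lambda>x. \<Sum>\<alpha>\<in>S. c2 \<alpha> * m \<alpha> x)"
  define u where "u = (\<lambda>x. m b x - q x)"
  have Bq: "Bd M q" unfolding q_def using Bd_sum[OF insert(1) mS] .
  have Bu: "Bd M u" unfolding u_def using Bd_diff[OF mb Bq] .
  have Bc1: "Bd M (\<lambda>x. \<Sum>\<alpha>\<in>S. c1 \<alpha> * m \<alpha> x)" using Bd_sum[OF insert(1) mS] .
  have ir: "integrable M r" unfolding r_def
    using insert.prems(1) Bd_int[OF M Bc1] by auto
  have iu: "integrable M u" using Bd_int[OF M Bu] .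
  have rS: "\<forall>\<beta>\<in>S. ip M r (m \<beta>) = 0" using c1 r_def by simp
  have uS: "\<forall>\<beta>\<in>S. ip M u (m \<beta>) = 0" using c2 u_def q_def by simp
  have ortho: "ip M v q = 0" if "integrable M v" "\<forall>\<beta>\<in>S. ip M v (m \<beta>) = 0" for v
    unfolding q_def using that by (subst ip_sum_right[OF insert(1) _ mS]) auto
  have mbqu: "m b = (\<lambda>x. q x + u x)" unfolding u_def by auto
  show ?case
  proof (cases "ip M u u = 0")
    case True
    then have "AE x in M. u x = 0" using ip_self_zero[OF Bu M] by blast
    then have ru: "ip M r u = 0" by (rule ip_AE_zero)
    have rb: "ip M r (m b) = 0"
      using ru ortho[OF ir rS] unfolding mbqu by (subst ip_add_right[OF ir Bq Bu]) simp
    define c where "c = (\<lambda>\<alpha>. if \<alpha> = b then 0 else c1 \<alpha>)"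
    have "(\<Sum>\<alpha>\<in>S. c \<alpha> * m \<alpha> x) = (\<Sum>\<alpha>\<in>S. c1 \<alpha> * m \<alpha> x)" for x
      unfolding c_def using insert(2) by (intro sum.cong) auto
    then have "(\<lambda>x. g x - (\<Sum>\<alpha>\<in>insert b S. c \<alpha> * m \<alpha> x)) = r"
      unfolding r_def using insert(1,2) by (simp add: c_def)
    then show ?thesis using rS rb by (intro exI[of _ c]) auto
  next
    case False
    define t where "t = ip M r u / ip M u u"
    define c where "c = (\<lambda>\<alpha>. if \<alpha> = b then t else c1 \<alpha> - t * c2 \<alpha>)"
    have "(\<Sum>\<alpha>\<in>insert b S. c \<alpha> * m \<alpha> x) = t * m b x + (\<Sum>\<alpha>\<in>S. (c1 \<alpha> - t * c2 \<alpha>) * m \<alpha> x)" for x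
      unfolding c_def using insert(1,2) by (auto intro!: sum.cong)
    also have "\<dots> x = (\<Sum>\<alpha>\<in>S. c1 \<alpha> * m \<alpha> x) + t * u x" for x
      unfolding u_def q_def by (simp add: algebra_simps sum_subtractf sum_distrib_left)
    finally have eq: "(\<lambda>x. g x - (\<Sum>\<alpha>\<in>insert b S. c \<alpha> * m \<alpha> x)) = (\<lambda>x. r x - t * u x)"
      unfolding r_def by auto
    have itu: "integrable M (\<lambda>x. t * u x)" using iu by auto
    have res_int: "integrable M (\<lambda>x. r x - t * u x)" using ir itu by auto
    have resS: "\<forall>\<beta>\<in>S. ip M (\<lambda>x. r x - t * u x) (m \<beta>) = 0"
      using rS uS ip_diff_left[OF ir itu mS] ip_scale_left[of M t u] by simp
    have resu: "ip M (\<lambda>x. r x - t * u x) u = 0"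
    proof -
      have "t * ip M u u = ip M r u" using False by (simp add: t_def)
      then show ?thesis using ip_diff_left[OF ir itu Bu] ip_scale_left[of M t u u] by simp
    qed
    have resb: "ip M (\<lambda>x. r x - t * u x) (m b) = 0"
      unfolding mbqu using resu ortho[OF res_int resS] by (subst ip_add_right[OF res_int Bq Bu]) simp
    show ?thesis using eq resS resb by (intro exI[of _ c]) auto
  qed
qed

lemma cont_Bd:
  assumes "continuous_on UNIV f" "compact R"
  shows "Bd (restrict_space lborel R) f"
proof -
  have "f \<in> borel_measurable borel" using assms(1) by (rule borel_measurable_continuous_onI)
  then have m: "f \<in> borel_measurable (restrict_space lborel R)"
    by (intro measurable_restrict_space1) simp
  have "compact (f ` R)" using assms by (intro compact_continuous_image) (auto intro: continuous_on_subset)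
  then obtain B where "\<forall>y\<in>f ` R. norm y \<le> B" using compact_imp_bounded bounded_iff by metis
  then show ?thesis using m unfolding Bd_def by (auto simp: space_restrict_space)
qed

lemma compact_sets: "compact R \<Longrightarrow> R \<in> sets lborel"
  by (simp add: borel_compact)

lemma fm_restrict: "compact R \<Longrightarrow> finite_measure (restrict_space lborel R)"
proof -
  assume R: "compact R"
  have "emeasure (restrict_space lborel R) R = emeasure lborel R"
    by (subst emeasure_restrict_space) (auto simp: borel_compact R)
  then show ?thesis using emeasure_compact_finite[OF R]
    by (intro finite_measureI) (auto simp: space_restrict_space)
qed

lemma lint_restrict: fixes F :: "_ \<Rightarrow> complex" shows "compact R \<Longrightarrow> (LINT x:R|lborel. F x) = integral\<^sup>L (restrict_space lborel R) F"
  unfolding set_lebesgue_integral_def by (subst integral_restrict_space) (auto simp: compact_sets borel_compact)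

lemma sint_restrict: fixes g :: "_ \<Rightarrow> complex" shows "compact R \<Longrightarrow> set_integrable lborel R g \<longleftrightarrow> integrable (restrict_space lborel R) g"
  unfolding set_integrable_def by (subst integrable_restrict_space) (auto simp: compact_sets borel_compact)

lemma polys_Bd: "p \<in> polys k \<Longrightarrow> compact R \<Longrightarrow> Bd (restrict_space lborel R) p"
  by (intro cont_Bd polys_continuous)

definition pspec :: "nat \<Rightarrow> (real ^ 'n::finite) set \<Rightarrow> (real ^ 'n \<Rightarrow> complex) \<Rightarrow> (real ^ 'n \<Rightarrow> complex) \<Rightarrow> bool" where
  "pspec k R g p \<longleftrightarrow> p \<in> polys k \<and> (\<forall>q \<in> polys k. (LINT x:R|lborel. (g x - p x) * cnj (q x)) = 0)"

lemma proj_exists: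
  assumes R: "compact R" and g: "set_integrable lborel R g"
  shows "\<exists>p. pspec k R g p"
proof -
  let ?M = "restrict_space lborel R"
  have M: "finite_measure ?M" using R by (rule fm_restrict)
  have gi: "integrable ?M g" using g R sint_restrict by blast
  have mB: "Bd ?M (mon \<alpha>)" for \<alpha> using R by (intro cont_Bd continuous_mon)
  obtain c where c: "\<forall>\<beta>\<in>midx k. ip ?M (\<lambda>x. g x - (\<Sum>\<alpha>\<in>midx k. c \<alpha> * mon \<alpha> x)) (mon \<beta>) = 0"
    using gram_schmidt[OF M finite_midx, where m=mon and g=g, OF mB gi] by blast
  define p where "p = (\<lambda>x. \<Sum>\<alpha>\<in>midx k. c \<alpha> * mon \<alpha> x)"
  have pp: "p \<in> polys k" unfolding p_def by (rule polysI) simp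
  have ri: "integrable ?M (\<lambda>x. g x - p x)"
    using gi Bd_int[OF M polys_Bd[OF pp R]] by auto
  have "(LINT x:R|lborel. (g x - p x) * cnj (q x)) = 0" if q: "q \<in> polys k" for q
  proof -
    obtain d where d: "q = (\<lambda>x. \<Sum>\<alpha>\<in>midx k. d \<alpha> * mon \<alpha> x)" using q polys_iff by blast
    have "(LINT x:R|lborel. (g x - p x) * cnj (q x)) = ip ?M (\<lambda>x. g x - p x) q"
      unfolding ip_def using R by (rule lint_restrict)
    also have "\<dots> = (\<Sum>\<alpha>\<in>midx k. cnj (d \<alpha>) * ip ?M (\<lambda>x. g x - p x) (mon \<alpha>))"
      unfolding d by (rule ip_sum_right[OF finite_midx ri mB])
    also have "\<dots> = 0" using c unfolding p_def by simp
    finally show ?thesis .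
  qed
  then show ?thesis using pp unfolding pspec_def by blast
qed

lemma proj_unique:
  assumes R: "compact R" "interior R \<noteq> {}" and g: "set_integrable lborel R g"
    and p1: "pspec k R g p1" and p2: "pspec k R g p2"
  shows "p1 = p2"
proof -
  let ?M = "restrict_space lborel R"
  have M: "finite_measure ?M" using R by (intro fm_restrict)
  have gi: "integrable ?M g" using g R sint_restrict by blast
  have pp1: "p1 \<in> polys k" and pp2: "p2 \<in> polys k" using p1 p2 unfolding pspec_def by auto
  define d where "d = (\<lambda>x. p1 x - p2 x)"
  have dp: "d \<in> polys k" unfolding d_def using pp1 pp2 by (rule polys_diff)
  have dB: "Bd ?M d" using dp R(1) by (rule polys_Bd)
  have i1: "integrable ?M (\<lambda>x. g x - p1 x)" using gi Bd_int[OF M polys_Bd[OF pp1 R(1)]] by auto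
  have i2: "integrable ?M (\<lambda>x. g x - p2 x)" using gi Bd_int[OF M polys_Bd[OF pp2 R(1)]] by auto
  have e1: "ip ?M (\<lambda>x. g x - p1 x) d = 0" using p1 dp unfolding pspec_def ip_def
    using lint_restrict[OF R(1)] by metis
  have e2: "ip ?M (\<lambda>x. g x - p2 x) d = 0" using p2 dp unfolding pspec_def ip_def
    using lint_restrict[OF R(1)] by metis
  have "ip ?M d d = ip ?M (\<lambda>x. (g x - p2 x) - (g x - p1 x)) d"
    unfolding d_def by simp
  also have "\<dots> = 0" using ip_diff_left[OF i2 i1 dB] e1 e2 by simp
  finally have "AE x in ?M. d x = 0" using ip_self_zero[OF dB M] by blast
  then have ae: "AE x in lborel. x \<in> R \<longrightarrow> d x = 0"
    using AE_restrict_space_iff[of R lborel] compact_sets[OF R(1)] by simp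
  then obtain N where N0: "{x \<in> space lborel. \<not> (x \<in> R \<longrightarrow> d x = 0)} \<subseteq> N"
    "emeasure lborel N = 0" "N \<in> sets lborel"
    by (rule AE_E)
  then have N: "N \<in> null_sets lborel" "{x \<in> space lborel. \<not> (x \<in> R \<longrightarrow> d x = 0)} \<subseteq> N"
    by (auto simp: null_sets_def)
  define U where "U = interior R \<inter> {x. d x \<noteq> 0}"
  have dc: "continuous_on UNIV d" using dp by (rule polys_continuous)
  have "open U" unfolding U_def
    by (intro open_Int open_interior) (use dc in \<open>auto intro: open_Collect_neq continuous_on_const\<close>)
  moreover have "negligible U"
  proof -
    have "U \<subseteq> N" using N(2) interior_subset[of R] unfolding U_def by auto
    moreover have "negligible N" using N(1) by (simp add: negligible_iff_null_sets null_sets_completionI)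
    ultimately show ?thesis by (rule negligible_subset[rotated])
  qed
  ultimately have "U = {}" using open_not_negligible by blast
  then have dz: "\<forall>x\<in>interior R. d x = 0" unfolding U_def by auto
  obtain x0 where "x0 \<in> interior R" using R(2) by auto
  then obtain e where "e > 0" "ball x0 e \<subseteq> interior R" using open_contains_ball open_interior by blast
  then have "d y = 0" for y using polys_zero_ball[OF dp, of e x0 y] dz by auto
  then show ?thesis unfolding d_def by auto
qed

lemma proj_spec:
  assumes R: "compact R" "interior R \<noteq> {}" and g: "set_integrable lborel R g"
  shows "pspec k R g (proj k R g)"
proof -
  obtain p where p: "pspec k R g p" using proj_exists[OF R(1) g] by blast
  have "pspec k R g (THE p. pspec k R g p)"
    by (rule theI[of _ p]) (use p proj_unique[OF R g] in auto)
  moreover have "proj k R g = (THE p. pspec k R g p)" unfolding proj_def pspec_def by simp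
  ultimately show ?thesis by simp
qed

lemma proj_eq:
  assumes R: "compact R" "interior R \<noteq> {}" and g: "set_integrable lborel R g" and p: "pspec k R g p"
  shows "proj k R g = p"
  using proj_unique[OF R g proj_spec[OF R g] p] .

definition dc :: "real^'n \<Rightarrow> real \<Rightarrow> nat \<Rightarrow> ('n::finite \<Rightarrow> nat) \<Rightarrow> (real^'n) set" where
  "dc a h j m = cbox (a + (h / 2 ^ j) *\<^sub>R (\<chi> i. real (m i))) (a + (h / 2 ^ j) *\<^sub>R (\<chi> i. real (m i) + 1))"

type_synonym 'n idx = "nat \<times> ('n \<Rightarrow> nat)"

definition C :: "real^'n \<Rightarrow> real \<Rightarrow> 'n::finite idx \<Rightarrow> (real^'n) set" where
  "C a h \<tau> = dc a h (fst \<tau>) (snd \<tau>)"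

definition desc :: "'n idx \<Rightarrow> 'n idx \<Rightarrow> bool" where
  "desc \<tau> \<rho> \<longleftrightarrow> fst \<rho> \<le> fst \<tau> \<and> (\<forall>i. snd \<tau> i div 2 ^ (fst \<tau> - fst \<rho>) = snd \<rho> i)"

definition anc :: "'n idx \<Rightarrow> nat \<Rightarrow> 'n idx" where
  "anc \<tau> l = (l, \<lambda>i. snd \<tau> i div 2 ^ (fst \<tau> - l))"

lemma One_vec: "(One :: real^'n::finite) = 1" by (metis Cart_1)

lemma One_nth[simp]: "(One :: real^'n::finite) $ i = 1" by (simp add: One_vec)

lemma mem_dc: "x \<in> dc a h j m \<longleftrightarrow>
   (\<forall>i. a$i + h / 2 ^ j * real (m i) \<le> x$i \<and> x$i \<le> a$i + h / 2 ^ j * (real (m i) + 1))"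
  by (simp add: dc_def mem_box_cart)

lemma mem_int_dc: "x \<in> interior (dc a h j m) \<longleftrightarrow>
   (\<forall>i. a$i + h / 2 ^ j * real (m i) < x$i \<and> x$i < a$i + h / 2 ^ j * (real (m i) + 1))"
  by (simp add: dc_def interior_cbox mem_box_cart)

lemma dc_cube: "h > 0 \<Longrightarrow> dc a h j m \<in> cubes"
proof -
  assume h: "h > 0"
  let ?a = "a + (h / 2 ^ j) *\<^sub>R (\<chi> i. real (m i))"
  have e: "a + (h / 2 ^ j) *\<^sub>R (\<chi> i. real (m i) + 1) = ?a + (h / 2 ^ j) *\<^sub>R One"
    by (simp add: vec_eq_iff algebra_simps One_vec add_divide_distrib)
  have "h / 2 ^ j > 0" using h by simp
  then show ?thesis unfolding cubes_def dc_def e by blast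
qed

lemma dc_0: "dc a h 0 (\<lambda>_. 0) = cbox a (a + h *\<^sub>R One)"
proof -
  have "(\<chi> i. real 0) = (0::real^'a)" by (simp add: vec_eq_iff)
  moreover have "(\<chi> i. real 0 + 1) = (One::real^'a)" by (simp add: vec_eq_iff One_vec)
  ultimately show ?thesis by (simp add: dc_def)
qed

lemma desc_refl: "desc \<tau> \<tau>" by (simp add: desc_def)

lemma desc_trans: assumes "desc \<tau> \<rho>" "desc \<rho> \<sigma>" shows "desc \<tau> \<sigma>"
proof -
  have l1: "fst \<rho> \<le> fst \<tau>" and l2: "fst \<sigma> \<le> fst \<rho>"
    and d1: "\<And>i. snd \<tau> i div 2 ^ (fst \<tau> - fst \<rho>) = snd \<rho> i"
    and d2: "\<And>i. snd \<rho> i div 2 ^ (fst \<rho> - fst \<sigma>) = snd \<sigma> i"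
    using assms unfolding desc_def by auto
  have e: "(2::nat) ^ (fst \<tau> - fst \<sigma>) = 2 ^ (fst \<tau> - fst \<rho>) * 2 ^ (fst \<rho> - fst \<sigma>)"
    using l1 l2 by (simp flip: power_add)
  have "snd \<tau> i div 2 ^ (fst \<tau> - fst \<sigma>) = snd \<sigma> i" for i
    unfolding e div_mult2_eq d1 d2 ..
  then show ?thesis using l1 l2 unfolding desc_def by auto
qed

lemma desc_anc: "l \<le> fst \<tau> \<Longrightarrow> desc \<tau> (anc \<tau> l)"
  by (simp add: desc_def anc_def)

lemma anc_desc: assumes "desc \<tau> \<rho>" "fst \<rho> \<le> l" "l \<le> fst \<tau>" shows "desc (anc \<tau> l) \<rho>"
proof -
  have d1: "\<And>i. snd \<tau> i div 2 ^ (fst \<tau> - fst \<rho>) = snd \<rho> i"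
    using assms unfolding desc_def by auto
  have e: "(2::nat) ^ (fst \<tau> - fst \<rho>) = 2 ^ (fst \<tau> - l) * 2 ^ (l - fst \<rho>)"
    using assms by (simp flip: power_add)
  have "snd \<tau> i div 2 ^ (fst \<tau> - l) div 2 ^ (l - fst \<rho>) = snd \<rho> i" for i
    using d1[of i] unfolding e div_mult2_eq .
  then show ?thesis using assms unfolding desc_def anc_def by auto
qed

lemma desc_same_level: "desc \<tau> \<rho> \<Longrightarrow> fst \<tau> = fst \<rho> \<Longrightarrow> \<tau> = \<rho>"
  by (cases \<tau>, cases \<rho>) (auto simp: desc_def)

lemma desc_level: "desc \<tau> \<rho> \<Longrightarrow> fst \<rho> \<le> fst \<tau>" by (simp add: desc_def)

lemma nat_div_bounds:
  fixes M m d :: nat assumes "M div 2 ^ d = m"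
  shows "2 ^ d * m \<le> M" "M + 1 \<le> 2 ^ d * (m + 1)"
proof -
  have e: "2 ^ d * m + M mod 2 ^ d = M" using mult_div_mod_eq[of "2 ^ d" M] assms by simp
  have l: "M mod 2 ^ d < 2 ^ d" by simp
  have d: "2 ^ d * (m + 1) = 2 ^ d * m + (2::nat) ^ d" by (simp add: distrib_left)
  show "2 ^ d * m \<le> M" using e by linarith
  show "M + 1 \<le> 2 ^ d * (m + 1)" unfolding d using e l by linarith
qed

lemma real_scale_bounds:
  fixes M m d j :: nat and h :: real
  assumes h: "h > 0" and A: "2 ^ d * m \<le> M" and B: "M + 1 \<le> 2 ^ d * (m + 1)"
  shows "h / 2 ^ j * real m \<le> h / 2 ^ (j + d) * real M"
        "h / 2 ^ (j + d) * (real M + 1) \<le> h / 2 ^ j * (real m + 1)"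
proof -
  have "real (2 ^ d * m) \<le> real M" using A by (simp only: of_nat_le_iff)
  then have A': "2 ^ d * real m \<le> real M" by simp
  have "real (M + 1) \<le> real (2 ^ d * (m + 1))" using B by (simp only: of_nat_le_iff)
  then have B': "real M + 1 \<le> 2 ^ d * (real m + 1)" by (simp add: algebra_simps)
  have p: "(2::real) ^ (j + d) = 2 ^ j * 2 ^ d" by (simp add: power_add)
  have "h / 2 ^ j * real m = h / 2 ^ (j + d) * (2 ^ d * real m)" by (simp add: power_add field_simps)
  also have "\<dots> \<le> h / 2 ^ (j + d) * real M" using A' h by (intro mult_left_mono) auto
  finally show "h / 2 ^ j * real m \<le> h / 2 ^ (j + d) * real M" .
  have "h / 2 ^ (j + d) * (real M + 1) \<le> h / 2 ^ (j + d) * (2 ^ d * (real m + 1))"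
    using B' h by (intro mult_left_mono) auto
  also have "\<dots> = h / 2 ^ j * (real m + 1)" by (simp add: power_add field_simps)
  finally show "h / 2 ^ (j + d) * (real M + 1) \<le> h / 2 ^ j * (real m + 1)" .
qed

lemma C_subset: assumes h: "h > 0" and d: "desc \<tau> \<rho>" shows "C a h \<tau> \<subseteq> C a h \<rho>"
proof
  fix x assume x: "x \<in> C a h \<tau>"
  define d where "d = fst \<tau> - fst \<rho>"
  have ft: "fst \<tau> = fst \<rho> + d" using d unfolding d_def desc_def by auto
  show "x \<in> C a h \<rho>" unfolding C_def mem_dc
  proof
    fix i
    have q: "snd \<tau> i div 2 ^ d = snd \<rho> i" using d unfolding desc_def d_def by auto
    note b = real_scale_bounds[OF h nat_div_bounds[OF q], of "fst \<rho>"]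
    have "a $ i + h / 2 ^ fst \<tau> * real (snd \<tau> i) \<le> x $ i \<and> x $ i \<le> a $ i + h / 2 ^ fst \<tau> * (real (snd \<tau> i) + 1)"
      using x unfolding C_def mem_dc by blast
    then have x1: "a $ i + h / 2 ^ (fst \<rho> + d) * real (snd \<tau> i) \<le> x $ i"
      and x2: "x $ i \<le> a $ i + h / 2 ^ (fst \<rho> + d) * (real (snd \<tau> i) + 1)" unfolding ft by auto
    show "a $ i + h / 2 ^ fst \<rho> * real (snd \<rho> i) \<le> x $ i \<and> x $ i \<le> a $ i + h / 2 ^ fst \<rho> * (real (snd \<rho> i) + 1)"
      using x1 x2 b by linarith
  qed
qed

lemma same_level_int:
  assumes h: "h > 0" and "y \<in> interior (dc a h j m)" "y \<in> interior (dc a h j m')"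
  shows "m = m'"
proof
  fix i
  let ?s = "h / 2 ^ j"
  have s: "?s > 0" using h by simp
  have y1: "a$i + ?s * real (m i) < y$i" "y$i < a$i + ?s * (real (m i) + 1)"
    using assms(2) unfolding mem_int_dc by auto
  have y2: "a$i + ?s * real (m' i) < y$i" "y$i < a$i + ?s * (real (m' i) + 1)"
    using assms(3) unfolding mem_int_dc by auto
  have 1: "?s * real (m i) < ?s * (real (m' i) + 1)" and 2: "?s * real (m' i) < ?s * (real (m i) + 1)"
    using y1 y2 by linarith+
  have "real (m i) < real (m' i) + 1" using 1 mult_less_cancel_left_pos[OF s] by blast
  moreover have "real (m' i) < real (m i) + 1" using 2 mult_less_cancel_left_pos[OF s] by blast
  ultimately show "m i = m' i" by linarith
qed

lemma int_desc:
  assumes h: "h > 0" and y1: "y \<in> interior (C a h \<tau>1)" and y2: "y \<in> interior (C a h \<tau>2)"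
    and l: "fst \<tau>1 \<le> fst \<tau>2"
  shows "desc \<tau>2 \<tau>1"
proof -
  let ?p = "anc \<tau>2 (fst \<tau>1)"
  have "C a h \<tau>2 \<subseteq> C a h ?p" using C_subset[OF h desc_anc[OF l]] .
  then have "y \<in> interior (C a h ?p)" using y2 interior_mono by blast
  then have "snd ?p = snd \<tau>1" using same_level_int[OF h] y1 unfolding C_def by (simp add: anc_def)
  then have eq: "(\<lambda>i. snd \<tau>2 i div 2 ^ (fst \<tau>2 - fst \<tau>1)) = snd \<tau>1" by (simp add: anc_def)
  have "snd \<tau>2 i div 2 ^ (fst \<tau>2 - fst \<tau>1) = snd \<tau>1 i" for i using fun_cong[OF eq, of i] by simp
  then show ?thesis unfolding desc_def using l by auto
qed

lemma emeasure_dc: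
  fixes a :: "real^'n::finite"
  assumes h: "h > 0"
  shows "emeasure lborel (dc a h j m) = ennreal ((h / 2 ^ j) ^ CARD('n::finite))"
proof -
  define l :: "real^'n" where "l = a + (h / 2 ^ j) *\<^sub>R (\<chi> i. real (m i))"
  define u :: "real^'n" where "u = a + (h / 2 ^ j) *\<^sub>R (\<chi> i. real (m i) + 1)"
  have du: "u $ i - l $ i = h / 2 ^ j" for i by (simp add: l_def u_def algebra_simps add_divide_distrib)
  have ne: "cbox l u \<noteq> {}" using du h by (simp add: interval_ne_empty_cart(1)) (metis diff_ge_0_iff_ge divide_pos_pos less_imp_le zero_less_numeral zero_less_power)
  have "emeasure lborel (cbox l u) = ennreal (measure lborel (cbox l u))"
    by (rule emeasure_eq_ennreal_measure) (use emeasure_compact_finite[of "cbox l u"] in auto)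
  also have "measure lborel (cbox l u) = (\<Prod>i\<in>UNIV. u $ i - l $ i)" using content_cbox_cart[OF ne] by simp
  also have "\<dots> = (h / 2 ^ j) ^ CARD('n)" by (simp add: du)
  finally show ?thesis by (simp add: dc_def l_def u_def)
qed

lemma dyadic_desc_C:
  fixes a :: "real^'n::finite"
  assumes h: "h > 0" and R: "R \<in> dyadic_desc (cbox a (a + h *\<^sub>R One))"
  shows "\<exists>\<tau>. desc \<tau> (0, \<lambda>_. 0) \<and> R = C a h \<tau>"
proof -
  obtain a' h' j m where R': "R = cbox (a' + (h' / 2 ^ j) *\<^sub>R (\<chi> i. real (m i))) (a' + (h' / 2 ^ j) *\<^sub>R (\<chi> i. real (m i) + 1))"
    and h': "h' > 0" and Q: "cbox a (a + h *\<^sub>R One) = cbox a' (a' + h' *\<^sub>R One)" and m: "\<forall>i. m i < (2::nat) ^ j"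
    using R unfolding dyadic_desc_def by auto
  have ne: "cbox a (a + h *\<^sub>R One) \<noteq> {}" using h unfolding One_vec by (auto simp: interval_ne_empty_cart(1))
  then have aa: "a = a'" and hh0: "a + h *\<^sub>R One = a' + h' *\<^sub>R One" using Q eq_cbox by blast+
  obtain i :: 'n where True by blast
  have "(a + h *\<^sub>R One) $ i = (a' + h' *\<^sub>R One) $ i" using hh0 by simp
  then have "h = h'" using aa by (simp add: One_vec)
  then have "R = C a h (j, m)" using R' aa by (simp add: C_def dc_def)
  moreover have "desc (j, m) (0, \<lambda>_. 0)" using m by (simp add: desc_def)
  ultimately show ?thesis by blast
qed

definition Sel :: "('n::finite idx \<Rightarrow> 'n idx \<Rightarrow> ennreal) \<Rightarrow> 'n idx \<Rightarrow> 'n idx set" where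
  "Sel Av \<rho> = {\<tau>. desc \<tau> \<rho> \<and> 2 * Av \<rho> \<rho> < Av \<rho> \<tau> \<and>
      (\<forall>\<tau>'. desc \<tau>' \<rho> \<and> desc \<tau> \<tau>' \<and> 2 * Av \<rho> \<rho> < Av \<rho> \<tau>' \<longrightarrow> \<tau>' = \<tau>)}"

lemma Sel_exists:
  assumes d: "desc \<tau> \<rho>" and P: "2 * Av \<rho> \<rho> < Av \<rho> \<tau>"
  shows "\<exists>\<tau>'\<in>Sel Av \<rho>. desc \<tau> \<tau>'"
proof -
  define L where "L = {l. \<exists>\<tau>'. desc \<tau> \<tau>' \<and> desc \<tau>' \<rho> \<and> 2 * Av \<rho> \<rho> < Av \<rho> \<tau>' \<and> fst \<tau>' = l}"
  have "fst \<tau> \<in> L" unfolding L_def using d P desc_refl by blast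
  then have l0: "Least (\<lambda>l. l \<in> L) \<in> L" by (rule LeastI)
  then obtain \<tau>' where t: "desc \<tau> \<tau>'" "desc \<tau>' \<rho>" "2 * Av \<rho> \<rho> < Av \<rho> \<tau>'" "fst \<tau>' = Least (\<lambda>l. l \<in> L)"
    unfolding L_def by blast
  have "\<tau>' \<in> Sel Av \<rho>"
    unfolding Sel_def
  proof (intro CollectI conjI allI impI)
    fix \<tau>'' assume a: "desc \<tau>'' \<rho> \<and> desc \<tau>' \<tau>'' \<and> 2 * Av \<rho> \<rho> < Av \<rho> \<tau>''"
    then have "fst \<tau>'' \<in> L" unfolding L_def using desc_trans[OF t(1)] by blast
    then have "fst \<tau>' \<le> fst \<tau>''" unfolding t(4) by (rule Least_le)
    moreover have "fst \<tau>'' \<le> fst \<tau>'" using a desc_level by blast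
    ultimately show "\<tau>'' = \<tau>'" using desc_same_level[of \<tau>' \<tau>''] a by auto
  qed (use t in auto)
  then show ?thesis using t(1) by blast
qed

lemma ennreal_not_less_double: "\<not> 2 * (x::ennreal) < x"
proof -
  have "x \<le> 2 * x" by (metis add_increasing2 mult_2 order_refl zero_le)
  then show ?thesis by (simp add: not_less)
qed

lemma Sel_parent:
  assumes t: "\<tau> \<in> Sel Av \<rho>"
  shows "fst \<rho> < fst \<tau>" "desc (anc \<tau> (fst \<tau> - 1)) \<rho>" "desc \<tau> (anc \<tau> (fst \<tau> - 1))"
    "Av \<rho> (anc \<tau> (fst \<tau> - 1)) \<le> 2 * Av \<rho> \<rho>"
proof -
  have d: "desc \<tau> \<rho>" and P: "2 * Av \<rho> \<rho> < Av \<rho> \<tau>"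
    and mx: "\<And>\<tau>'. desc \<tau>' \<rho> \<Longrightarrow> desc \<tau> \<tau>' \<Longrightarrow> 2 * Av \<rho> \<rho> < Av \<rho> \<tau>' \<Longrightarrow> \<tau>' = \<tau>"
    using t unfolding Sel_def by auto
  have "\<tau> \<noteq> \<rho>" using P ennreal_not_less_double[of "Av \<rho> \<rho>"] by auto
  then have "fst \<tau> \<noteq> fst \<rho>" using desc_same_level[OF d] by blast
  then show lt: "fst \<rho> < fst \<tau>" using desc_level[OF d] by simp
  show dp: "desc (anc \<tau> (fst \<tau> - 1)) \<rho>" using anc_desc[OF d] lt by simp
  show dt: "desc \<tau> (anc \<tau> (fst \<tau> - 1))" by (rule desc_anc) simp
  have "anc \<tau> (fst \<tau> - 1) \<noteq> \<tau>"
  proof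
    assume "anc \<tau> (fst \<tau> - 1) = \<tau>"
    then have "fst (anc \<tau> (fst \<tau> - 1)) = fst \<tau>" by simp
    then have "fst \<tau> - 1 = fst \<tau>" by (simp add: anc_def)
    with lt show False by simp
  qed
  then show "Av \<rho> (anc \<tau> (fst \<tau> - 1)) \<le> 2 * Av \<rho> \<rho>" using mx[OF dp dt] by (meson not_less)
qed

lemma Sel_desc: "\<tau> \<in> Sel Av \<rho> \<Longrightarrow> desc \<tau> \<rho>" by (simp add: Sel_def)

lemma Sel_disj:
  assumes h: "h > 0" and t1: "\<tau>1 \<in> Sel Av \<rho>" and t2: "\<tau>2 \<in> Sel Av \<rho>"
    and y1: "y \<in> interior (C a h \<tau>1)" and y2: "y \<in> interior (C a h \<tau>2)"
  shows "\<tau>1 = \<tau>2"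
proof -
  have key: "\<sigma>1 = \<sigma>2" if s1: "\<sigma>1 \<in> Sel Av \<rho>" and s2: "\<sigma>2 \<in> Sel Av \<rho>"
    and z1: "y \<in> interior (C a h \<sigma>1)" and z2: "y \<in> interior (C a h \<sigma>2)" and l: "fst \<sigma>1 \<le> fst \<sigma>2" for \<sigma>1 \<sigma>2
  proof -
    have "desc \<sigma>2 \<sigma>1" using int_desc[OF h z1 z2 l] .
    moreover have "desc \<sigma>1 \<rho>" "2 * Av \<rho> \<rho> < Av \<rho> \<sigma>1" using s1 unfolding Sel_def by auto
    moreover have "desc \<sigma>1 \<rho> \<and> desc \<sigma>2 \<sigma>1 \<and> 2 * Av \<rho> \<rho> < Av \<rho> \<sigma>1 \<longrightarrow> \<sigma>1 = \<sigma>2"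
      using s2 unfolding Sel_def by blast
    ultimately show "\<sigma>1 = \<sigma>2" by blast
  qed
  show ?thesis
  proof (cases "fst \<tau>1 \<le> fst \<tau>2")
    case True then show ?thesis using key[OF t1 t2 y1 y2] by blast
  next
    case False then show ?thesis using key[OF t2 t1 y2 y1] by simp
  qed
qed

primrec gen :: "('n::finite idx \<Rightarrow> 'n idx \<Rightarrow> ennreal) \<Rightarrow> nat \<Rightarrow> 'n idx set" where
  "gen Av 0 = {(0, \<lambda>_. 0)}"
| "gen Av (Suc i) = (\<Union>\<rho>\<in>gen Av i. Sel Av \<rho>)"

lemma gen_desc: "\<tau> \<in> gen Av i \<Longrightarrow> desc \<tau> (0, \<lambda>_. 0)"
proof (induction i arbitrary: \<tau>)
  case 0 then show ?case by (simp add: desc_refl)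
next
  case (Suc i)
  then obtain \<rho> where "\<rho> \<in> gen Av i" "\<tau> \<in> Sel Av \<rho>" by auto
  then show ?case using Sel_desc desc_trans Suc.IH by blast
qed

lemma descent:
  assumes "desc \<tau> (0, \<lambda>_. 0)"
  shows "(\<exists>\<rho>\<in>gen Av j. desc \<tau> \<rho>) \<or> (\<exists>j'<j. \<exists>\<rho>\<in>gen Av j'. desc \<tau> \<rho> \<and> \<not> 2 * Av \<rho> \<rho> < Av \<rho> \<tau>)"
proof (induction j)
  case 0 then show ?case using assms by simp
next
  case (Suc j)
  then show ?case
  proof
    assume "\<exists>\<rho>\<in>gen Av j. desc \<tau> \<rho>"
    then obtain \<rho> where r: "\<rho> \<in> gen Av j" "desc \<tau> \<rho>" by blast
    show ?thesis
    proof (cases "2 * Av \<rho> \<rho> < Av \<rho> \<tau>")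
      case True
      then obtain \<tau>' where "\<tau>' \<in> Sel Av \<rho>" "desc \<tau> \<tau>'" using Sel_exists[OF r(2)] by blast
      then show ?thesis using r(1) by auto
    next
      case False then show ?thesis using r by blast
    qed
  next
    assume "\<exists>j'<j. \<exists>\<rho>\<in>gen Av j'. desc \<tau> \<rho> \<and> \<not> 2 * Av \<rho> \<rho> < Av \<rho> \<tau>"
    then show ?thesis using less_Suc_eq by blast
  qed
qed

lemma C_cube: "h > 0 \<Longrightarrow> C a h \<tau> \<in> cubes" unfolding C_def by (rule dc_cube)

lemma cube_compact: "R \<in> cubes \<Longrightarrow> compact R" unfolding cubes_def by auto

lemma cube_interior: "R \<in> cubes \<Longrightarrow> interior R \<noteq> {}"
proof -
  assume "R \<in> cubes"
  then obtain a h where R: "R = cbox a (a + h *\<^sub>R One)" "h > 0" unfolding cubes_def by auto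
  have "\<forall>i. a$i < (a + h *\<^sub>R (One::real^'a))$i" using R(2) by (simp add: One_vec)
  then have "box a (a + h *\<^sub>R (One::real^'a)) \<noteq> {}" by (simp add: interval_ne_empty_cart)
  then show ?thesis using R by (simp add: interior_cbox)
qed

lemma cube_sets: "R \<in> cubes \<Longrightarrow> R \<in> sets lborel"
  using cube_compact compact_sets by blast

lemma loc_int_cube: "loc_integrable f \<Longrightarrow> R \<in> cubes \<Longrightarrow> set_integrable lborel R f"
  unfolding loc_integrable_def using cube_compact by blast

definition vol :: "real \<Rightarrow> 'n::finite idx \<Rightarrow> real" where
  "vol h \<tau> = (h / 2 ^ fst \<tau>) ^ CARD('n)"

lemma vol_pos: "h > 0 \<Longrightarrow> vol h \<tau> > 0" by (simp add: vol_def)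

lemma emeasure_C: "h > 0 \<Longrightarrow> emeasure lborel (C a h \<tau>) = ennreal (vol h \<tau>)"
  unfolding C_def vol_def by (rule emeasure_dc)

lemma vol_parent: "fst \<tau> = Suc l \<Longrightarrow> vol h (anc \<tau> l) = 2 ^ CARD('n::finite) * vol h (\<tau> :: 'n idx)"
proof -
  assume t: "fst \<tau> = Suc l"
  have e: "h / 2 ^ fst \<tau> = (h / 2 ^ l) / 2" using t by simp
  have "vol h \<tau> = ((h / 2 ^ l) / 2) ^ CARD('n)" unfolding vol_def e by (rule refl)
  also have "\<dots> = (h / 2 ^ l) ^ CARD('n) / 2 ^ CARD('n)" by (rule power_divide)
  finally have "vol h \<tau> = (h / 2 ^ l) ^ CARD('n) / 2 ^ CARD('n)" .
  moreover have "vol h (anc \<tau> l) = (h / 2 ^ l) ^ CARD('n)" by (simp add: vol_def anc_def)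
  ultimately show ?thesis by simp
qed

lemma divide_ennreal_pos: "v > 0 \<Longrightarrow> (x::ennreal) / ennreal v = x * ennreal (1 / v)"
  by (simp add: divide_ennreal_def inverse_ennreal inverse_eq_divide)

definition Pr :: "nat \<Rightarrow> real^'n \<Rightarrow> real \<Rightarrow> (real^'n \<Rightarrow> complex) \<Rightarrow> 'n::finite idx \<Rightarrow> real^'n \<Rightarrow> complex" where
  "Pr k a h f \<tau> = proj k (C a h \<tau>) f"

definition Av :: "nat \<Rightarrow> real^'n \<Rightarrow> real \<Rightarrow> (real^'n \<Rightarrow> complex) \<Rightarrow> 'n::finite idx \<Rightarrow> 'n idx \<Rightarrow> ennreal" where
  "Av k a h f \<rho> \<tau> = avg (C a h \<tau>) (\<lambda>y. f y - Pr k a h f \<rho> y)"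

lemma Pr_spec: "h > 0 \<Longrightarrow> loc_integrable f \<Longrightarrow> pspec k (C a h \<tau>) f (Pr k a h f \<tau>)"
proof -
  assume h: "h > 0" and f: "loc_integrable f"
  have R: "C a h \<tau> \<in> cubes" using h by (rule C_cube)
  show ?thesis unfolding Pr_def by (rule proj_spec[OF cube_compact[OF R] cube_interior[OF R] loc_int_cube[OF f R]])
qed

lemma Pr_poly: "h > 0 \<Longrightarrow> loc_integrable f \<Longrightarrow> Pr k a h f \<tau> \<in> polys k"
  using Pr_spec unfolding pspec_def by blast

lemma poly_set_integrable: "p \<in> polys k \<Longrightarrow> R \<in> cubes \<Longrightarrow> set_integrable lborel R p"
proof -
  assume p: "p \<in> polys k" and R: "R \<in> cubes"
  have "integrable (restrict_space lborel R) p"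
    using Bd_int[OF fm_restrict polys_Bd[OF p]] cube_compact[OF R] by blast
  then show ?thesis using sint_restrict cube_compact[OF R] by blast
qed

lemma diff_set_integrable:
  "h > 0 \<Longrightarrow> loc_integrable f \<Longrightarrow> R \<in> cubes \<Longrightarrow> set_integrable lborel R (\<lambda>y. f y - Pr k a h f \<rho> y)"
  by (rule set_integral_diff(1)[OF loc_int_cube poly_set_integrable[OF Pr_poly]])

lemma proj_shift:
  assumes R: "R \<in> cubes" and g: "set_integrable lborel R g" and P: "P \<in> polys k"
  shows "proj k R (\<lambda>y. g y - P y) = (\<lambda>y. proj k R g y - P y)"
proof -
  have cR: "compact R" "interior R \<noteq> {}" using R cube_compact cube_interior by auto
  have sp: "pspec k R g (proj k R g)" using proj_spec[OF cR g] .
  have gi: "set_integrable lborel R (\<lambda>y. g y - P y)"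
    using g poly_set_integrable[OF P R] by (rule set_integral_diff(1))
  have "pspec k R (\<lambda>y. g y - P y) (\<lambda>y. proj k R g y - P y)"
    using sp P unfolding pspec_def by (auto intro: polys_diff)
  then show ?thesis by (rule proj_eq[OF cR gi])
qed

lemma poly_step:
  assumes h: "h > 0" and f: "loc_integrable f" and y: "y \<in> C a h \<tau>"
    and hyp: "\<forall>R (g :: real ^ 'n \<Rightarrow> complex) x. R \<in> cubes \<longrightarrow> set_integrable lborel R g \<longrightarrow> x \<in> R \<longrightarrow>
          ennreal (norm (proj k R g x)) \<le> ennreal \<gamma> * avg R g"
  shows "ennreal (norm (Pr k a h f \<tau> y - Pr k a h f \<rho> y)) \<le> ennreal \<gamma> * Av k a h f \<rho> (\<tau> :: 'n::finite idx)"
proof -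
  have R: "C a h \<tau> \<in> cubes" using h by (rule C_cube)
  have "proj k (C a h \<tau>) (\<lambda>y. f y - Pr k a h f \<rho> y) = (\<lambda>y. Pr k a h f \<tau> y - Pr k a h f \<rho> y)"
    unfolding Pr_def[of k a h f \<tau>] using proj_shift[OF R loc_int_cube[OF f R] Pr_poly[OF h f]] by simp
  moreover have "ennreal (norm (proj k (C a h \<tau>) (\<lambda>y. f y - Pr k a h f \<rho> y) y)) \<le> ennreal \<gamma> * Av k a h f \<rho> \<tau>"
    unfolding Av_def using hyp R diff_set_integrable[OF h f R] y by blast
  ultimately show ?thesis by simp
qed

lemma count_le:
  fixes F :: "'i::countable \<Rightarrow> ennreal"
  assumes "\<And>i. F i \<le> c" "\<And>i j. F i \<noteq> 0 \<Longrightarrow> F j \<noteq> 0 \<Longrightarrow> i = j"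
  shows "(\<integral>\<^sup>+i. F i \<partial>count_space UNIV) \<le> c"
proof (cases "\<exists>i0. F i0 \<noteq> 0")
  case True
  then obtain i0 where i0: "F i0 \<noteq> 0" by blast
  have "(\<integral>\<^sup>+i. F i \<partial>count_space UNIV) = (\<Sum>i\<in>{i0}. F i)"
    by (rule nn_integral_count_space') (use assms(2) i0 in auto)
  then show ?thesis using assms(1) by simp
next
  case False
  then have "(\<lambda>i. F i) = (\<lambda>i. 0)" by auto
  then show ?thesis by simp
qed

lemma count_ge:
  fixes F :: "'i::countable \<Rightarrow> ennreal"
  shows "F i0 \<le> (\<integral>\<^sup>+i. F i \<partial>count_space UNIV)"
proof -
  have "F i0 = (\<integral>\<^sup>+i. F i * indicator {i0} i \<partial>count_space UNIV)" by simp
  also have "\<dots> \<le> (\<integral>\<^sup>+i. F i \<partial>count_space UNIV)"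
    by (intro nn_integral_mono) (auto simp: indicator_def)
  finally show ?thesis .
qed

lemma cbox_boundary_null: "emeasure lborel (cbox l u - box l u) = 0"
proof -
  have "box l u \<subseteq> cbox l u" by (rule box_subset_cbox)
  moreover have "emeasure lborel (cbox l u) \<noteq> \<infinity>" using emeasure_compact_finite[of "cbox l u"] by simp
  moreover have "emeasure lborel (box l u) \<le> emeasure lborel (cbox l u)" by (rule emeasure_mono) (auto simp: box_subset_cbox)
  ultimately have "emeasure lborel (cbox l u - box l u) = emeasure lborel (cbox l u) - emeasure lborel (box l u)"
    by (intro emeasure_Diff) (auto simp: top_unique)
  also have "\<dots> = 0" by (simp add: emeasure_lborel_cbox_eq emeasure_lborel_box_eq)
  finally show ?thesis .
qed

lemma int_interior_C:
  "(\<integral>\<^sup>+y. F y * indicator (C a h \<tau>) y \<partial>lborel) = (\<integral>\<^sup>+y. F y * indicator (interior (C a h \<tau>)) y \<partial>lborel)"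
proof (rule nn_integral_cong_AE)
  obtain l u where lu: "C a h \<tau> = cbox l u" unfolding C_def dc_def by blast
  have N: "cbox l u - box l u \<in> null_sets lborel"
    using cbox_boundary_null[of l u] by (auto simp: null_sets_def)
  show "AE y in lborel. F y * indicator (C a h \<tau>) y = F y * indicator (interior (C a h \<tau>)) y"
    using box_subset_cbox[of l u] by (intro AE_I'[OF N]) (auto simp: lu interior_cbox indicator_def)
qed

definition Ii :: "(real^'n \<Rightarrow> complex) \<Rightarrow> (real^'n) set \<Rightarrow> ennreal" where
  "Ii g S = (\<integral>\<^sup>+y. ennreal (norm (g y)) * indicator S y \<partial>lborel)"

lemma avg_Ii: "avg R g = Ii g R / emeasure lborel R"
  unfolding avg_def Ii_def by simp

lemma avg_C: "h > 0 \<Longrightarrow> avg (C a h \<tau>) g = Ii g (C a h \<tau>) * ennreal (1 / vol h \<tau>)"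
  unfolding avg_Ii by (simp add: emeasure_C divide_ennreal_pos vol_pos)

lemma Ii_mono: "S \<subseteq> T \<Longrightarrow> Ii g S \<le> Ii g T"
  unfolding Ii_def by (intro nn_integral_mono) (auto simp: indicator_def)

lemma Ii_finite: "set_integrable lborel R g \<Longrightarrow> Ii g R < \<infinity>"
proof -
  assume "set_integrable lborel R g"
  then have "integrable lborel (\<lambda>x. indicator R x *\<^sub>R g x)" unfolding set_integrable_def .
  then have "(\<integral>\<^sup>+x. ennreal (norm (indicator R x *\<^sub>R g x)) \<partial>lborel) < \<infinity>"
    by (simp add: integrable_iff_bounded)
  moreover have "(\<lambda>x. ennreal (norm (indicator R x *\<^sub>R g x))) = (\<lambda>x. ennreal (norm (g x)) * indicator R x)"
    by (auto simp: indicator_def)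
  ultimately show ?thesis unfolding Ii_def by simp
qed

lemma avg_parent:
  assumes h: "h > 0" and t: "fst \<tau> = Suc l"
  shows "avg (C a h \<tau>) g \<le> 2 ^ CARD('n) * avg (C a h (anc \<tau> l)) (g :: real^'n::finite \<Rightarrow> complex)"
proof -
  let ?p = "anc \<tau> l"
  have sub: "C a h \<tau> \<subseteq> C a h ?p" using C_subset[OF h desc_anc[of l \<tau>]] t by simp
  have "avg (C a h \<tau>) g = Ii g (C a h \<tau>) * ennreal (1 / vol h \<tau>)" using h by (rule avg_C)
  also have "\<dots> \<le> Ii g (C a h ?p) * ennreal (1 / vol h \<tau>)" using Ii_mono[OF sub] by (rule mult_right_mono) simp
  also have "ennreal (1 / vol h \<tau>) = 2 ^ CARD('n) * ennreal (1 / vol h ?p)"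
  proof -
    have "1 / vol h \<tau> = 2 ^ CARD('n) * (1 / vol h ?p)"
      using vol_parent[OF t, of h] vol_pos[OF h, of \<tau>] by simp
    moreover have "ennreal (2 ^ CARD('n) * (1 / vol h ?p)) = ennreal (2 ^ CARD('n)) * ennreal (1 / vol h ?p)"
      using vol_pos[OF h, of ?p] by (intro ennreal_mult) auto
    ultimately have "ennreal (1 / vol h \<tau>) = ennreal (2 ^ CARD('n)) * ennreal (1 / vol h ?p)"
      by simp
    moreover have "ennreal (2 ^ CARD('n)) = 2 ^ CARD('n)" using ennreal_power[of 2 "CARD('n)"] by simp
    ultimately show ?thesis by simp
  qed
  also have "Ii g (C a h ?p) * (2 ^ CARD('n) * ennreal (1 / vol h ?p)) = 2 ^ CARD('n) * avg (C a h ?p) g"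
    using avg_C[OF h, of a ?p g] by (simp add: ac_simps)
  finally show ?thesis .
qed

lemma avg_add_bound:
  assumes h: "h > 0" and g1: "g1 \<in> borel_measurable lborel" and c: "c \<ge> 0"
    and b: "\<And>y. y \<in> C a h \<tau> \<Longrightarrow> norm (g2 y) \<le> c"
  shows "avg (C a h \<tau>) (\<lambda>y. g1 y + g2 y) \<le> avg (C a h \<tau>) g1 + ennreal c"
proof -
  let ?R = "C a h \<tau>"
  have "Ii (\<lambda>y. g1 y + g2 y) ?R \<le> (\<integral>\<^sup>+y. (ennreal (norm (g1 y)) * indicator ?R y + ennreal c * indicator ?R y) \<partial>lborel)"
    unfolding Ii_def
  proof (intro nn_integral_mono)
    fix y
    show "ennreal (norm (g1 y + g2 y)) * indicator ?R y \<le> ennreal (norm (g1 y)) * indicator ?R y + ennreal c * indicator ?R y"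
    proof (cases "y \<in> ?R")
      case True
      have "norm (g1 y + g2 y) \<le> norm (g1 y) + c" using b[OF True] norm_triangle_ineq[of "g1 y" "g2 y"] by linarith
      then show ?thesis using True c by (simp add: ennreal_plus[symmetric] del: ennreal_plus)
    qed simp
  qed
  also have "\<dots> = Ii g1 ?R + ennreal c * emeasure lborel ?R"
  proof -
    have R[measurable]: "?R \<in> sets borel" using cube_sets[OF C_cube[OF h]] by simp
    note g1[measurable]
    have m1: "(\<lambda>y. ennreal (norm (g1 y)) * indicator ?R y) \<in> borel_measurable lborel" by measurable
    have m2: "(\<lambda>y. ennreal c * indicator ?R y) \<in> borel_measurable lborel" by measurable
    show ?thesis unfolding Ii_def
      by (subst nn_integral_add[OF m1 m2]) (simp add: nn_integral_cmult_indicator)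
  qed
  finally have I: "Ii (\<lambda>y. g1 y + g2 y) ?R \<le> Ii g1 ?R + ennreal c * ennreal (vol h \<tau>)"
    using emeasure_C[OF h, of a \<tau>] by simp
  have "avg ?R (\<lambda>y. g1 y + g2 y) \<le> (Ii g1 ?R + ennreal c * ennreal (vol h \<tau>)) * ennreal (1 / vol h \<tau>)"
    unfolding avg_C[OF h] using I by (rule mult_right_mono) simp
  also have "\<dots> = avg ?R g1 + ennreal c"
    using vol_pos[OF h, of \<tau>] unfolding avg_C[OF h]
    by (simp add: distrib_right mult.assoc ennreal_mult[symmetric])
  finally show ?thesis .
qed

lemma f_meas: "loc_integrable f \<Longrightarrow> f \<in> borel_measurable lborel"
  unfolding loc_integrable_def by blast

lemma Pr_meas: "h > 0 \<Longrightarrow> loc_integrable f \<Longrightarrow> Pr k a h f \<rho> \<in> borel_measurable lborel"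
  using borel_measurable_continuous_onI[OF polys_continuous[OF Pr_poly]] by simp

lemma g_meas: assumes h: "h > 0" and f: "loc_integrable f"
  shows "(\<lambda>y. f y - Pr k a h f \<rho> y) \<in> borel_measurable lborel"
  using borel_measurable_diff[OF f_meas[OF f] Pr_meas[OF h f]] .

lemma Av_Ii: "h > 0 \<Longrightarrow> Av k a h f \<rho> \<tau> = Ii (\<lambda>y. f y - Pr k a h f \<rho> y) (C a h \<tau>) * ennreal (1 / vol h \<tau>)"
  unfolding Av_def by (rule avg_C)

lemma times_inv_vol: "h > 0 \<Longrightarrow> ennreal (1 / vol h \<tau>) * ennreal (vol h \<tau>) = 1"
  using vol_pos[of h \<tau>] by (simp add: ennreal_mult[symmetric] del: ennreal_mult)

lemma sel_measure:
  assumes h: "h > 0" and f: "loc_integrable f"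
  shows "2 * (\<integral>\<^sup>+\<tau>. ennreal (vol h \<tau>) * indicator (Sel (Av k a h f) \<rho>) \<tau> \<partial>count_space UNIV) \<le> ennreal (vol h (\<rho>::'n::finite idx))"
proof -
  let ?AV = "Av k a h f"
  let ?g = "\<lambda>y. f y - Pr k a h f \<rho> y"
  let ?X = "Sel ?AV \<rho>"
  let ?S = "\<integral>\<^sup>+\<tau>. ennreal (vol h \<tau>) * indicator ?X \<tau> \<partial>count_space UNIV"
  define A0 where "A0 = ?AV \<rho> \<rho>"
  have IiC: "Ii ?g (C a h \<rho>) = A0 * ennreal (vol h \<rho>)"
    unfolding A0_def Av_Ii[OF h] using times_inv_vol[OF h, of \<rho>] by (simp add: mult.assoc)
  have Ifin: "Ii ?g (C a h \<rho>) < \<infinity>" using Ii_finite[OF diff_set_integrable[OF h f C_cube[OF h]]] .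
  have A0fin: "A0 \<noteq> top"
  proof
    assume "A0 = top"
    then have "Ii ?g (C a h \<rho>) = \<infinity>" using IiC vol_pos[OF h, of \<rho>] by (simp add: ennreal_mult_eq_top_iff)
    then show False using Ifin by simp
  qed
  have key1: "2 * A0 * ennreal (vol h \<tau>) \<le> Ii ?g (C a h \<tau>)" if t: "\<tau> \<in> ?X" for \<tau>
  proof -
    have "2 * A0 < Ii ?g (C a h \<tau>) * ennreal (1 / vol h \<tau>)"
      using t unfolding Sel_def A0_def Av_Ii[OF h] by auto
    then have "2 * A0 * ennreal (vol h \<tau>) \<le> Ii ?g (C a h \<tau>) * ennreal (1 / vol h \<tau>) * ennreal (vol h \<tau>)"
      by (intro mult_right_mono) auto
    also have "\<dots> = Ii ?g (C a h \<tau>)" using times_inv_vol[OF h, of \<tau>] by (simp add: mult.assoc)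
    finally show ?thesis .
  qed
  show ?thesis
  proof (cases "A0 = 0")
    case True
    have "?X = {}"
    proof (rule ccontr)
      assume "?X \<noteq> {}"
      then obtain \<tau> where t: "\<tau> \<in> ?X" by blast
      have "0 < ?AV \<rho> \<tau>" using t True unfolding Sel_def A0_def by auto
      then have "0 < Ii ?g (C a h \<tau>)" unfolding Av_Ii[OF h] by (metis mult_zero_left not_gr_zero)
      moreover have "Ii ?g (C a h \<tau>) \<le> Ii ?g (C a h \<rho>)"
        using Ii_mono C_subset[OF h Sel_desc[OF t]] by blast
      ultimately show False using IiC True by simp
    qed
    then show ?thesis by simp
  next
    case False
    have gm: "?g \<in> borel_measurable lborel" using g_meas[OF h f] .
    have intm: "interior (C a h \<tau>) \<in> sets borel" for \<tau> by (rule borel_open) simp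
    have "A0 * (2 * ?S) = (2 * A0) * ?S" by (simp add: ac_simps)
    also have "\<dots> = (\<integral>\<^sup>+\<tau>. (2 * A0) * (ennreal (vol h \<tau>) * indicator ?X \<tau>) \<partial>count_space UNIV)"
      by (rule nn_integral_cmult[symmetric]) auto
    also have "\<dots> = (\<integral>\<^sup>+\<tau>. 2 * A0 * ennreal (vol h \<tau>) * indicator ?X \<tau> \<partial>count_space UNIV)"
      by (simp add: ac_simps)
    also have "\<dots> \<le> (\<integral>\<^sup>+\<tau>. Ii ?g (interior (C a h \<tau>)) * indicator ?X \<tau> \<partial>count_space UNIV)"
    proof (intro nn_integral_mono)
      fix \<tau>
      show "2 * A0 * ennreal (vol h \<tau>) * indicator ?X \<tau> \<le> Ii ?g (interior (C a h \<tau>)) * indicator ?X \<tau>"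
        using key1[of \<tau>] int_interior_C[of "\<lambda>y. ennreal (norm (?g y))" a h \<tau>]
        by (auto simp: indicator_def Ii_def)
    qed
    also have "\<dots> = (\<integral>\<^sup>+\<tau>. \<integral>\<^sup>+y. ennreal (norm (?g y)) * indicator (interior (C a h \<tau>)) y * indicator ?X \<tau> \<partial>lborel \<partial>count_space UNIV)"
      unfolding Ii_def by (subst nn_integral_multc) (use gm intm in auto)
    also have "\<dots> = (\<integral>\<^sup>+y. \<integral>\<^sup>+\<tau>. ennreal (norm (?g y)) * indicator (interior (C a h \<tau>)) y * indicator ?X \<tau> \<partial>count_space UNIV \<partial>lborel)"
      by (rule nn_integral_count_space_nn_integral[symmetric]) (use gm intm in auto)
    also have "\<dots> = (\<integral>\<^sup>+y. ennreal (norm (?g y)) * \<integral>\<^sup>+\<tau>. indicator (interior (C a h \<tau>)) y * indicator ?X \<tau> \<partial>count_space UNIV \<partial>lborel)"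
      by (subst nn_integral_cmult[symmetric]) (auto simp: ac_simps)
    also have "\<dots> \<le> (\<integral>\<^sup>+y. ennreal (norm (?g y)) * indicator (C a h \<rho>) y \<partial>lborel)"
    proof (intro nn_integral_mono mult_left_mono count_le)
      fix y \<tau>
      show "indicator (interior (C a h \<tau>)) y * indicator ?X \<tau> \<le> (indicator (C a h \<rho>) y :: ennreal)"
      proof (cases "y \<in> interior (C a h \<tau>) \<and> \<tau> \<in> ?X")
        case True
        then have "y \<in> C a h \<rho>" using C_subset[OF h Sel_desc] interior_subset by blast
        then show ?thesis using True by simp
      qed auto
    next
      fix y \<tau>1 \<tau>2
      assume "indicator (interior (C a h \<tau>1)) y * indicator ?X \<tau>1 \<noteq> (0::ennreal)"
        "indicator (interior (C a h \<tau>2)) y * indicator ?X \<tau>2 \<noteq> (0::ennreal)"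
      then have "y \<in> interior (C a h \<tau>1)" "\<tau>1 \<in> ?X" "y \<in> interior (C a h \<tau>2)" "\<tau>2 \<in> ?X"
        by (auto simp: indicator_def split: if_splits)
      then show "\<tau>1 = \<tau>2" using Sel_disj[OF h, of \<tau>1 _ \<rho> \<tau>2 y a] by blast
    qed auto
    also have "\<dots> = A0 * ennreal (vol h \<rho>)" using IiC unfolding Ii_def .
    finally have "A0 * (2 * ?S) \<le> A0 * ennreal (vol h \<rho>)" .
    then show ?thesis using ennreal_mult_le_mult_iff[OF False A0fin] by blast
  qed
qed

definition gn :: "nat \<Rightarrow> real^'n \<Rightarrow> real \<Rightarrow> (real^'n \<Rightarrow> complex) \<Rightarrow> nat \<Rightarrow> 'n::finite idx set" where
  "gn k a h f i = gen (Av k a h f) i"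

definition Gs :: "nat \<Rightarrow> real^'n \<Rightarrow> real \<Rightarrow> (real^'n \<Rightarrow> complex) \<Rightarrow> nat \<Rightarrow> (real^'n::finite) set" where
  "Gs k a h f i = (\<Union>\<tau>\<in>gn k a h f i. C a h \<tau>)"

definition Sm :: "nat \<Rightarrow> real^'n \<Rightarrow> real \<Rightarrow> (real^'n \<Rightarrow> complex) \<Rightarrow> nat \<Rightarrow> ennreal" where
  "Sm k a h f i = (\<integral>\<^sup>+\<tau>. ennreal (vol h \<tau>) * indicator (gn k a h f i :: 'n::finite idx set) \<tau> \<partial>count_space UNIV)"

lemma Sm_0: fixes a :: "real^'n::finite" shows "Sm k a h f 0 = ennreal (vol h ((0, \<lambda>_. 0) :: 'n::finite idx))"
proof -
  have "Sm k a h f 0 = (\<integral>\<^sup>+\<tau>. ennreal (vol h \<tau>) * indicator {(0, \<lambda>_. 0) :: 'n idx} \<tau> \<partial>count_space UNIV)"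
    unfolding Sm_def gn_def by simp
  also have "\<dots> = ennreal (vol h ((0, \<lambda>_. 0) :: 'n idx))" by simp
  finally show ?thesis .
qed

lemma Sm_Suc:
  fixes a :: "real^'n::finite"
  assumes h: "h > 0" and f: "loc_integrable f"
  shows "2 * Sm k a h f (Suc i) \<le> Sm k a h f (i :: nat)"
proof -
  let ?g = "gn k a h f i"
  let ?S = "Sel (Av k a h f)"
  have "Sm k a h f (Suc i) \<le> (\<integral>\<^sup>+\<tau>. \<integral>\<^sup>+\<rho>. ennreal (vol h \<tau>) * indicator ?g \<rho> * indicator (?S \<rho>) \<tau> \<partial>count_space UNIV \<partial>count_space UNIV)"
    unfolding Sm_def
  proof (intro nn_integral_mono)
    fix \<tau> :: "'n idx"
    show "ennreal (vol h \<tau>) * indicator (gn k a h f (Suc i)) \<tau> \<le> (\<integral>\<^sup>+\<rho>. ennreal (vol h \<tau>) * indicator ?g \<rho> * indicator (?S \<rho>) \<tau> \<partial>count_space UNIV)"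
    proof (cases "\<tau> \<in> gn k a h f (Suc i)")
      case True
      then obtain \<rho> where r: "\<rho> \<in> ?g" "\<tau> \<in> ?S \<rho>" unfolding gn_def by auto
      have "ennreal (vol h \<tau>) * indicator (gn k a h f (Suc i)) \<tau> = ennreal (vol h \<tau>) * indicator ?g \<rho> * indicator (?S \<rho>) \<tau>"
        using True r by simp
      also have "\<dots> \<le> (\<integral>\<^sup>+\<rho>. ennreal (vol h \<tau>) * indicator ?g \<rho> * indicator (?S \<rho>) \<tau> \<partial>count_space UNIV)"
        by (rule count_ge)
      finally show ?thesis .
    qed simp
  qed
  also have "\<dots> = (\<integral>\<^sup>+\<rho>. \<integral>\<^sup>+\<tau>. ennreal (vol h \<tau>) * indicator ?g \<rho> * indicator (?S \<rho>) \<tau> \<partial>count_space UNIV \<partial>count_space UNIV)"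
    by (rule nn_integral_count_space_nn_integral) auto
  also have "\<dots> = (\<integral>\<^sup>+\<rho>. indicator ?g \<rho> * (\<integral>\<^sup>+\<tau>. ennreal (vol h \<tau>) * indicator (?S \<rho>) \<tau> \<partial>count_space UNIV) \<partial>count_space UNIV)"
    by (intro nn_integral_cong) (subst nn_integral_cmult[symmetric], auto simp: ac_simps)
  finally have A: "Sm k a h f (Suc i) \<le> \<dots>" .
  have "2 * Sm k a h f (Suc i) \<le> 2 * (\<integral>\<^sup>+\<rho>. indicator ?g \<rho> * (\<integral>\<^sup>+\<tau>. ennreal (vol h \<tau>) * indicator (?S \<rho>) \<tau> \<partial>count_space UNIV) \<partial>count_space UNIV)"
    using A by (rule mult_left_mono) simp
  also have "\<dots> = (\<integral>\<^sup>+\<rho>. indicator ?g \<rho> * (2 * (\<integral>\<^sup>+\<tau>. ennreal (vol h \<tau>) * indicator (?S \<rho>) \<tau> \<partial>count_space UNIV)) \<partial>count_space UNIV)"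
    by (subst nn_integral_cmult[symmetric]) (auto simp: ac_simps)
  also have "\<dots> \<le> (\<integral>\<^sup>+\<rho>. indicator ?g \<rho> * ennreal (vol h \<rho>) \<partial>count_space UNIV)"
    by (intro nn_integral_mono mult_left_mono sel_measure[OF h f]) simp
  also have "\<dots> = Sm k a h f i" unfolding Sm_def by (simp add: ac_simps)
  finally show ?thesis .
qed

lemma Sm_bound:
  fixes a :: "real^'n::finite"
  assumes h: "h > 0" and f: "loc_integrable f"
  shows "2 ^ i * Sm k a h f i \<le> ennreal (h ^ CARD('n::finite))"
proof (induction i)
  case 0 then show ?case using Sm_0[of k a h f] by (simp add: vol_def)
next
  case (Suc i)
  have "2 ^ Suc i * Sm k a h f (Suc i) = 2 ^ i * (2 * Sm k a h f (Suc i))" by (simp add: ac_simps)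
  also have "\<dots> \<le> 2 ^ i * Sm k a h f i" using Sm_Suc[OF h f] by (rule mult_left_mono) simp
  finally show ?case using Suc.IH by simp
qed

lemma Gs_sets: "Gs k a h f i \<in> sets lborel"
proof -
  have "(\<Union>\<tau>\<in>gn k a h f i. C a h \<tau>) \<in> sets borel"
    by (rule sets.countable_UN'') (auto simp: C_def dc_def)
  then show ?thesis unfolding Gs_def by simp
qed

lemma Gs_measure:
  fixes a :: "real^'n::finite"
  assumes h: "h > 0"
  shows "emeasure lborel (Gs k a h f i) \<le> Sm k a h f i"
proof -
  let ?g = "gn k a h f i"
  have Cm: "C a h \<tau> \<in> sets borel" for \<tau> by (auto simp: C_def dc_def)
  have "emeasure lborel (Gs k a h f i) = (\<integral>\<^sup>+y. indicator (Gs k a h f i) y \<partial>lborel)"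
    using Gs_sets[of k a h f i] nn_integral_indicator[of "Gs k a h f i" lborel] by simp
  also have "\<dots> \<le> (\<integral>\<^sup>+y. \<integral>\<^sup>+\<tau>. indicator ?g \<tau> * indicator (C a h \<tau>) y \<partial>count_space UNIV \<partial>lborel)"
  proof (intro nn_integral_mono)
    fix y
    show "indicator (Gs k a h f i) y \<le> (\<integral>\<^sup>+\<tau>. indicator ?g \<tau> * indicator (C a h \<tau>) y \<partial>count_space UNIV)"
    proof (cases "y \<in> Gs k a h f i")
      case True
      then obtain \<tau> where "\<tau> \<in> ?g" "y \<in> C a h \<tau>" unfolding Gs_def by auto
      then have "indicator (Gs k a h f i) y = (indicator ?g \<tau> * indicator (C a h \<tau>) y :: ennreal)"
        using True by simp
      then show ?thesis using count_ge[of "\<lambda>\<tau>. indicator ?g \<tau> * indicator (C a h \<tau>) y" \<tau>] by simp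
    qed simp
  qed
  also have "\<dots> = (\<integral>\<^sup>+\<tau>. \<integral>\<^sup>+y. indicator ?g \<tau> * indicator (C a h \<tau>) y \<partial>lborel \<partial>count_space UNIV)"
    by (rule nn_integral_count_space_nn_integral) (use Cm in auto)
  also have "\<dots> = (\<integral>\<^sup>+\<tau>. indicator ?g \<tau> * ennreal (vol h \<tau>) \<partial>count_space UNIV)"
    by (intro nn_integral_cong) (simp add: nn_integral_cmult_indicator Cm emeasure_C[OF h])
  also have "\<dots> = Sm k a h f i" unfolding Sm_def by (simp add: ac_simps)
  finally show ?thesis .
qed

lemma osc_le_sharp:
  assumes h: "h > 0" and x: "x \<in> C a h \<rho>"
  shows "Av k a h f \<rho> \<rho> \<le> sharp_max k f x"
  unfolding Av_def Pr_def sharp_max_def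
  by (rule SUP_upper) (use C_cube[OF h, of a \<rho>] x in auto)

abbreviation rho0 :: "'n::finite idx" where "rho0 \<equiv> (0, \<lambda>_. 0)"

lemma PL:
  fixes a :: "real^'n::finite"
  assumes h: "h > 0" and f: "loc_integrable f"
    and hyp: "\<forall>R (g :: real ^ 'n \<Rightarrow> complex) x. R \<in> cubes \<longrightarrow> set_integrable lborel R g \<longrightarrow> x \<in> R \<longrightarrow>
          ennreal (norm (proj k R g x)) \<le> ennreal \<gamma> * avg R g"
  shows "\<rho> \<in> gn k a h f j \<Longrightarrow> y \<in> C a h \<rho> \<Longrightarrow> x \<in> C a h \<rho> \<Longrightarrow>
    ennreal (norm (Pr k a h f \<rho> y - Pr k a h f rho0 y)) \<le> of_nat j * (ennreal \<gamma> * 2 ^ CARD('n) * 2) * sharp_max k f x"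
proof (induction j arbitrary: \<rho>)
  case 0
  then show ?case by (simp add: gn_def)
next
  case (Suc j)
  let ?B = "ennreal \<gamma> * 2 ^ CARD('n) * 2"
  let ?M = "sharp_max k f x"
  obtain \<rho>' where r': "\<rho>' \<in> gn k a h f j" "\<rho> \<in> Sel (Av k a h f) \<rho>'"
    using Suc.prems(1) unfolding gn_def by auto
  let ?p = "anc \<rho> (fst \<rho> - 1)"
  note sp = Sel_parent[OF r'(2)]
  have sub: "C a h \<rho> \<subseteq> C a h \<rho>'" using C_subset[OF h Sel_desc[OF r'(2)]] .
  have y': "y \<in> C a h \<rho>'" and x': "x \<in> C a h \<rho>'" using sub Suc.prems by auto
  have ft: "fst \<rho> = Suc (fst \<rho> - 1)" using sp(1) by simp
  have p1: "ennreal (norm (Pr k a h f \<rho> y - Pr k a h f \<rho>' y)) \<le> ennreal \<gamma> * Av k a h f \<rho>' \<rho>"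
    by (rule poly_step[OF h f Suc.prems(2) hyp])
  have "Av k a h f \<rho>' \<rho> \<le> 2 ^ CARD('n) * Av k a h f \<rho>' ?p"
    unfolding Av_def using avg_parent[OF h ft] .
  also have "\<dots> \<le> 2 ^ CARD('n) * (2 * Av k a h f \<rho>' \<rho>')"
    using sp(4) by (rule mult_left_mono) simp
  also have "\<dots> \<le> 2 ^ CARD('n) * (2 * ?M)"
    using osc_le_sharp[OF h x'] by (intro mult_left_mono) auto
  finally have "Av k a h f \<rho>' \<rho> \<le> 2 ^ CARD('n) * (2 * ?M)" .
  then have "ennreal \<gamma> * Av k a h f \<rho>' \<rho> \<le> ennreal \<gamma> * (2 ^ CARD('n) * (2 * ?M))"
    by (rule mult_left_mono) simp
  also have "\<dots> = ?B * ?M" by (simp add: ac_simps)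
  finally have s1: "ennreal (norm (Pr k a h f \<rho> y - Pr k a h f \<rho>' y)) \<le> ?B * ?M"
    using p1 by (rule order_trans[rotated])
  have s2: "ennreal (norm (Pr k a h f \<rho>' y - Pr k a h f rho0 y)) \<le> of_nat j * ?B * ?M"
    by (rule Suc.IH[OF r'(1) y' x'])
  have "norm (Pr k a h f \<rho> y - Pr k a h f rho0 y) \<le> norm (Pr k a h f \<rho> y - Pr k a h f \<rho>' y) + norm (Pr k a h f \<rho>' y - Pr k a h f rho0 y)"
    using norm_triangle_ineq[of "Pr k a h f \<rho> y - Pr k a h f \<rho>' y" "Pr k a h f \<rho>' y - Pr k a h f rho0 y"] by simp
  then have "ennreal (norm (Pr k a h f \<rho> y - Pr k a h f rho0 y)) \<le> ennreal (norm (Pr k a h f \<rho> y - Pr k a h f \<rho>' y)) + ennreal (norm (Pr k a h f \<rho>' y - Pr k a h f rho0 y))"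
    by (simp add: ennreal_plus[symmetric] del: ennreal_plus)
  also have "\<dots> \<le> ?B * ?M + of_nat j * ?B * ?M" using s1 s2 by (rule add_mono)
  also have "\<dots> = (1 + of_nat j) * (?B * ?M)" by (simp only: distrib_right mult_1 mult.assoc)
  also have "\<dots> = of_nat (Suc j) * ?B * ?M" by (simp add: mult.assoc)
  finally show ?case .
qed

lemma main_bound:
  fixes a :: "real^'n::finite"
  assumes h: "h > 0" and f: "loc_integrable f"
    and hyp: "\<forall>R (g :: real ^ 'n \<Rightarrow> complex) x. R \<in> cubes \<longrightarrow> set_integrable lborel R g \<longrightarrow> x \<in> R \<longrightarrow>
          ennreal (norm (proj k R g x)) \<le> ennreal \<gamma> * avg R g"
    and xG: "x \<notin> Gs k a h f (Suc i)" and d: "desc \<tau> rho0" and x: "x \<in> C a h \<tau>"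
  shows "avg (C a h \<tau>) (\<lambda>y. f y - Pr k a h f rho0 y) \<le> (2 + of_nat i * (ennreal \<gamma> * 2 ^ CARD('n) * 2)) * sharp_max k f x"
proof -
  let ?B = "ennreal \<gamma> * 2 ^ CARD('n) * 2"
  let ?M = "sharp_max k f x"
  show ?thesis
  proof (cases "?M = top")
    case True
    have "(2 + of_nat i * ?B) \<noteq> 0" by simp
    then have "(2 + of_nat i * ?B) * ?M = top" using True by (simp add: ennreal_mult_top)
    then show ?thesis by simp
  next
    case Mfin: False
    from descent[OF d, of "Av k a h f" "Suc i"]
    obtain j' \<rho> where j': "j' < Suc i" "\<rho> \<in> gn k a h f j'" "desc \<tau> \<rho>" "\<not> 2 * Av k a h f \<rho> \<rho> < Av k a h f \<rho> \<tau>"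
    proof
      assume "\<exists>\<rho>\<in>gen (Av k a h f) (Suc i). desc \<tau> \<rho>"
      then obtain \<rho> where "\<rho> \<in> gn k a h f (Suc i)" "desc \<tau> \<rho>" unfolding gn_def by blast
      then have "x \<in> Gs k a h f (Suc i)" unfolding Gs_def using C_subset[OF h] x by blast
      then show ?thesis using xG by blast
    qed (auto simp: gn_def)
    have sub: "C a h \<tau> \<subseteq> C a h \<rho>" using C_subset[OF h j'(3)] .
    have xr: "x \<in> C a h \<rho>" using sub x by blast
    define c where "c = enn2real (of_nat j' * ?B * ?M)"
    have fin: "of_nat j' * ?B * ?M \<noteq> top" using Mfin by (simp add: ennreal_mult_eq_top_iff power_eq_top_ennreal)
    have cE: "ennreal c = of_nat j' * ?B * ?M" unfolding c_def using fin by (simp add: ennreal_enn2real_if)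
    have c0: "c \<ge> 0" unfolding c_def by simp
    have bd: "norm (Pr k a h f \<rho> y - Pr k a h f rho0 y) \<le> c" if y: "y \<in> C a h \<tau>" for y
    proof -
      have "ennreal (norm (Pr k a h f \<rho> y - Pr k a h f rho0 y)) \<le> ennreal c"
        unfolding cE using PL[OF h f hyp j'(2)] y sub xr by blast
      then show ?thesis using c0 by simp
    qed
    have "avg (C a h \<tau>) (\<lambda>y. f y - Pr k a h f rho0 y) =
          avg (C a h \<tau>) (\<lambda>y. (f y - Pr k a h f \<rho> y) + (Pr k a h f \<rho> y - Pr k a h f rho0 y))"
      by simp
    also have "\<dots> \<le> avg (C a h \<tau>) (\<lambda>y. f y - Pr k a h f \<rho> y) + ennreal c"
      by (rule avg_add_bound[OF h g_meas[OF h f] c0 bd])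
    also have "avg (C a h \<tau>) (\<lambda>y. f y - Pr k a h f \<rho> y) = Av k a h f \<rho> \<tau>" unfolding Av_def ..
    also have "Av k a h f \<rho> \<tau> \<le> 2 * ?M"
    proof -
      have "Av k a h f \<rho> \<tau> \<le> 2 * Av k a h f \<rho> \<rho>" using j'(4) by (simp add: not_less)
      also have "\<dots> \<le> 2 * ?M" using osc_le_sharp[OF h xr] by (rule mult_left_mono) simp
      finally show ?thesis .
    qed
    also have "ennreal c \<le> of_nat i * ?B * ?M"
      unfolding cE using j'(1) by (intro mult_right_mono) auto
    finally show ?thesis by (simp add: distrib_right)
  qed
qed

lemma Q_C: "C a h rho0 = cbox a (a + h *\<^sub>R One)"
  unfolding C_def by (simp add: dc_0)

lemma dmax_bound:
  fixes a :: "real^'n::finite"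
  assumes h: "h > 0" and f: "loc_integrable f"
    and hyp: "\<forall>R (g :: real ^ 'n \<Rightarrow> complex) x. R \<in> cubes \<longrightarrow> set_integrable lborel R g \<longrightarrow> x \<in> R \<longrightarrow>
          ennreal (norm (proj k R g x)) \<le> ennreal \<gamma> * avg R g"
    and xG: "x \<notin> Gs k a h f (Suc i)"
  shows "dyadic_max (cbox a (a + h *\<^sub>R One)) (\<lambda>y. f y - proj k (cbox a (a + h *\<^sub>R One)) f y) x
    \<le> (2 + of_nat i * (ennreal \<gamma> * 2 ^ CARD('n) * 2)) * sharp_max k f x"
  unfolding dyadic_max_def
proof (rule SUP_least)
  fix R assume R: "R \<in> {R \<in> dyadic_desc (cbox a (a + h *\<^sub>R One)). x \<in> R}"
  then obtain \<tau> where t: "desc \<tau> rho0" "R = C a h \<tau>" using dyadic_desc_C[OF h] by blast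
  have "proj k (cbox a (a + h *\<^sub>R One)) f = Pr k a h f rho0" unfolding Pr_def Q_C ..
  then show "avg R (\<lambda>y. f y - proj k (cbox a (a + h *\<^sub>R One)) f y) \<le> (2 + of_nat i * (ennreal \<gamma> * 2 ^ CARD('n) * 2)) * sharp_max k f x"
    using main_bound[OF h f hyp xG t(1)] R t(2) by simp
qed

lemma epowr_ennreal: "0 \<le> x \<Longrightarrow> epowr (ennreal x) s = ennreal (x powr s)"
  by (simp add: epowr_def)

lemma epowr_top[simp]: "epowr top s = top" by (simp add: epowr_def)

lemma epowr_0[simp]: "epowr 0 s = 0" by (simp add: epowr_def)

lemma epowr_mono: assumes "x \<le> y" "0 \<le> s" shows "epowr x s \<le> epowr y s"
proof (cases "y = top")
  case True then show ?thesis by simp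
next
  case False
  then have "x \<noteq> top" using assms(1) top_unique by auto
  then have "enn2real x \<le> enn2real y" using enn2real_mono[OF assms(1)] False by (simp add: less_top)
  then have "enn2real x powr s \<le> enn2real y powr s" using assms(2) by (intro powr_mono2) auto
  then show ?thesis using False \<open>x \<noteq> top\<close> by (simp add: epowr_def)
qed

lemma epowr_eq_0: "0 < s \<Longrightarrow> epowr x s = 0 \<longleftrightarrow> x = 0"
proof (cases "x = top")
  case True then show ?thesis by simp
next
  case False
  assume s: "0 < s"
  obtain r where r: "x = ennreal r" "r \<ge> 0" using False by (cases x) auto
  then show ?thesis using s by (simp add: epowr_ennreal)
qed

lemma epowr_mult: assumes s: "0 < s" shows "epowr (x * y) s = epowr x s * epowr y s"
proof (cases "x = top \<or> y = top")
  case True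
  show ?thesis
  proof (cases "x = 0 \<or> y = 0")
    case True then show ?thesis by auto
  next
    case False
    then have "x * y = top" using \<open>x = top \<or> y = top\<close> by (auto simp: ennreal_mult_eq_top_iff)
    moreover have "epowr x s \<noteq> 0" "epowr y s \<noteq> 0" using False epowr_eq_0[OF s] by auto
    ultimately show ?thesis using \<open>x = top \<or> y = top\<close> by (auto simp: ennreal_mult_top ennreal_top_mult)
  qed
next
  case False
  then obtain a b where ab: "x = ennreal a" "y = ennreal b" "a \<ge> 0" "b \<ge> 0"
    by (cases x; cases y) auto
  then show ?thesis by (simp add: epowr_ennreal ennreal_mult[symmetric] powr_mult del: ennreal_mult)
qed

lemma epowr_epowr: assumes "0 < s" "0 < t" shows "epowr (epowr x s) t = epowr x (s * t)"
proof (cases "x = top")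
  case True then show ?thesis by simp
next
  case False
  then obtain a where a: "x = ennreal a" "a \<ge> 0" by (cases x) auto
  then show ?thesis by (simp add: epowr_ennreal powr_powr)
qed

lemma young0:
  fixes a b :: real
  assumes "0 \<le> a" "0 \<le> b" "0 \<le> \<alpha>" "0 \<le> \<beta>" "\<alpha> + \<beta> = 1"
  shows "a powr \<alpha> * b powr \<beta> \<le> \<alpha> * a + \<beta> * b"
proof (cases "a = 0 \<or> b = 0")
  case True then show ?thesis using assms by auto
next
  case False then show ?thesis using Youngs_inequality_0[of \<alpha> \<beta> a b] assms by auto
qed

lemma holder:
  fixes u :: "'a \<Rightarrow> ennreal" and v :: "'a \<Rightarrow> real"
  assumes um[measurable]: "u \<in> borel_measurable M" and vm[measurable]: "v \<in> borel_measurable M"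
    and v0: "\<And>x. 0 \<le> v x" and al: "0 < \<alpha>" and be: "0 < \<beta>" and ab: "\<alpha> + \<beta> = 1"
  shows "(\<integral>\<^sup>+x. epowr (u x) \<alpha> * ennreal (v x) \<partial>M)
     \<le> epowr (\<integral>\<^sup>+x. u x \<partial>M) \<alpha> * epowr (\<integral>\<^sup>+x. ennreal (v x powr (1 / \<beta>)) \<partial>M) \<beta>"
proof -
  define U where "U = (\<integral>\<^sup>+x. u x \<partial>M)"
  define V where "V = (\<integral>\<^sup>+x. ennreal (v x powr (1 / \<beta>)) \<partial>M)"
  have em[measurable]: "(\<lambda>x. epowr (u x) \<alpha>) \<in> borel_measurable M"
    unfolding epowr_def by measurable
  have main: "(\<integral>\<^sup>+x. epowr (u x) \<alpha> * ennreal (v x) \<partial>M) \<le> epowr U \<alpha> * epowr V \<beta>"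
  proof (cases "U = 0 \<or> V = 0")
    case True
    have "AE x in M. epowr (u x) \<alpha> * ennreal (v x) = 0"
    proof (cases "U = 0")
      case True
      then have "AE x in M. u x = 0" unfolding U_def by (simp add: nn_integral_0_iff_AE)
      then show ?thesis by eventually_elim simp
    next
      case False
      then have "V = 0" using \<open>U = 0 \<or> V = 0\<close> by simp
      then have "AE x in M. ennreal (v x powr (1 / \<beta>)) = 0" unfolding V_def by (simp add: nn_integral_0_iff_AE)
      then show ?thesis
      proof eventually_elim
        case (elim x)
        then have "v x powr (1 / \<beta>) \<le> 0" by simp
        then have "v x powr (1 / \<beta>) = 0" using powr_ge_zero[of "v x" "1 / \<beta>"] by linarith
        then have "v x = 0" by simp
        then show ?case by simp
      qed
    qed
    then have "(\<integral>\<^sup>+x. epowr (u x) \<alpha> * ennreal (v x) \<partial>M) = 0"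
      by (subst nn_integral_0_iff_AE) auto
    then show ?thesis by simp
  next
    case False
    then have U0: "U \<noteq> 0" and V0: "V \<noteq> 0" by auto
    show ?thesis
    proof (cases "U = top \<or> V = top")
      case True
      have "epowr U \<alpha> \<noteq> 0" "epowr V \<beta> \<noteq> 0" using U0 V0 epowr_eq_0 al be by auto
      then have "epowr U \<alpha> * epowr V \<beta> = top" using True
        by (auto simp: ennreal_mult_top ennreal_top_mult)
      then show ?thesis by simp
    next
      case False
      then have Ut: "U \<noteq> top" and Vt: "V \<noteq> top" by auto
      define Ur where "Ur = enn2real U"
      define Vr where "Vr = enn2real V"
      have Ur: "U = ennreal Ur" "Ur > 0" using Ut U0 unfolding Ur_def by (cases U; auto)+
      have Vr: "V = ennreal Vr" "Vr > 0" using Vt V0 unfolding Vr_def by (cases V; auto)+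
      define c1 where "c1 = Ur powr \<alpha> * Vr powr \<beta> * \<alpha> / Ur"
      define c2 where "c2 = Ur powr \<alpha> * Vr powr \<beta> * \<beta> / Vr"
      have c1: "c1 \<ge> 0" and c2: "c2 \<ge> 0" using Ur Vr al be by (auto simp: c1_def c2_def)
      have fin: "AE x in M. u x \<noteq> top" using nn_integral_PInf_AE[OF um] Ut unfolding U_def infinity_ennreal_def by auto
      have "(\<integral>\<^sup>+x. epowr (u x) \<alpha> * ennreal (v x) \<partial>M)
          \<le> (\<integral>\<^sup>+x. ennreal c1 * ennreal (enn2real (u x)) + ennreal c2 * ennreal (v x powr (1 / \<beta>)) \<partial>M)"
      proof (rule nn_integral_mono_AE)
        show "AE x in M. epowr (u x) \<alpha> * ennreal (v x) \<le> ennreal c1 * ennreal (enn2real (u x)) + ennreal c2 * ennreal (v x powr (1 / \<beta>))"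
          using fin
        proof eventually_elim
          case (elim x)
          define a where "a = enn2real (u x)"
          have a0: "a \<ge> 0" unfolding a_def by simp
          have ua: "u x = ennreal a" using elim unfolding a_def by (simp add: ennreal_enn2real_if)
          define b where "b = v x powr (1 / \<beta>)"
          have b0: "b \<ge> 0" unfolding b_def by simp
          have bv: "b powr \<beta> = v x" unfolding b_def using v0[of x] be by (simp add: powr_powr)
          have y: "(a / Ur) powr \<alpha> * (b / Vr) powr \<beta> \<le> \<alpha> * (a / Ur) + \<beta> * (b / Vr)"
            using young0[of "a / Ur" "b / Vr" \<alpha> \<beta>] a0 b0 Ur Vr al be ab by auto
          have "a powr \<alpha> * v x = Ur powr \<alpha> * Vr powr \<beta> * ((a / Ur) powr \<alpha> * (b / Vr) powr \<beta>)"
            using Ur Vr a0 b0 bv by (simp add: powr_divide field_simps)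
          also have "\<dots> \<le> Ur powr \<alpha> * Vr powr \<beta> * (\<alpha> * (a / Ur) + \<beta> * (b / Vr))"
            using y by (intro mult_left_mono) auto
          also have "\<dots> = c1 * a + c2 * b" unfolding c1_def c2_def by (simp add: field_simps)
          finally have r: "a powr \<alpha> * v x \<le> c1 * a + c2 * b" .
          have "epowr (u x) \<alpha> * ennreal (v x) = ennreal (a powr \<alpha> * v x)"
            using a0 v0[of x] by (simp add: ua epowr_ennreal ennreal_mult)
          also have "\<dots> \<le> ennreal (c1 * a + c2 * b)" using r by (rule ennreal_leI)
          also have "\<dots> = ennreal c1 * ennreal a + ennreal c2 * ennreal b"
            using c1 c2 a0 b0 by (simp add: ennreal_mult)
          finally show ?case unfolding a_def b_def .
        qed
      qed
      also have "\<dots> = ennreal c1 * (\<integral>\<^sup>+x. ennreal (enn2real (u x)) \<partial>M) + ennreal c2 * V"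
        unfolding V_def by (subst nn_integral_add) (auto simp: nn_integral_cmult)
      also have "(\<integral>\<^sup>+x. ennreal (enn2real (u x)) \<partial>M) = U"
        unfolding U_def by (rule nn_integral_cong_AE) (use fin in \<open>auto simp: less_top\<close>)
      also have "ennreal c1 * U + ennreal c2 * V = ennreal (c1 * Ur + c2 * Vr)"
        using c1 c2 Ur Vr by (simp add: ennreal_mult)
      also have "c1 * Ur + c2 * Vr = Ur powr \<alpha> * Vr powr \<beta>"
      proof -
        have "c1 * Ur + c2 * Vr = (\<alpha> + \<beta>) * (Ur powr \<alpha> * Vr powr \<beta>)"
          using Ur Vr unfolding c1_def c2_def by (simp add: field_simps)
        then show ?thesis using ab by simp
      qed
      also have "ennreal (Ur powr \<alpha> * Vr powr \<beta>) = epowr U \<alpha> * epowr V \<beta>"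
        using Ur Vr by (simp add: epowr_ennreal ennreal_mult)
      finally show ?thesis .
    qed
  qed
  then show ?thesis unfolding U_def V_def .
qed

lemma exp_quarter: "exp (1/4::real) \<le> 3/2"
proof (rule ccontr)
  assume "\<not> exp (1/4::real) \<le> 3/2"
  then have "(3/2::real) ^ 4 < exp (1/4) ^ 4" by (intro power_strict_mono) auto
  also have "exp (1/4::real) ^ 4 = exp (real 4 * (1/4))" by (rule exp_of_nat_mult[symmetric])
  also have "\<dots> = exp 1" by simp
  also have "\<dots> < 272/100" by (rule e_less_272)
  finally have "(3/2::real) ^ 4 < 272/100" .
  moreover have "(3/2::real) ^ 4 = 81/16" by (simp add: power4_eq_xxxx)
  ultimately show False by simp
qed

lemma term_bound:
  fixes q :: real and m :: nat
  assumes q: "q \<ge> 1" and m: "m \<ge> 1"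
  shows "real m powr q \<le> (4 * q) powr q * (3/2) ^ m"
proof -
  have q0: "q > 0" using q by simp
  let ?x = "real m / (4 * q)"
  have x0: "?x > 0" using m q0 by simp
  have "?x \<le> exp (?x - 1)" using exp_ge_add_one_self[of "?x - 1"] by simp
  then have "?x powr q \<le> exp (?x - 1) powr q" using x0 q0 by (intro powr_mono2) auto
  also have "\<dots> = exp (q * (?x - 1))" by (simp add: powr_def)
  also have "q * (?x - 1) = real m / 4 - q" using q0 by (simp add: field_simps)
  also have "exp (real m / 4 - q) \<le> exp (real m * (1/4))" using q0 by simp
  also have "\<dots> = exp (1/4) ^ m" by (rule exp_of_nat_mult)
  also have "\<dots> \<le> (3/2) ^ m" using exp_quarter by (intro power_mono) auto
  finally have A: "?x powr q \<le> (3/2) ^ m" .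
  have "real m powr q = (4 * q) powr q * ?x powr q"
    using q0 m by (simp add: powr_divide powr_mult)
  also have "\<dots> \<le> (4 * q) powr q * (3/2) ^ m" using A by (intro mult_left_mono) auto
  finally show ?thesis .
qed

lemma series_bound:
  fixes q K :: real and b :: "nat \<Rightarrow> real"
  assumes q: "q \<ge> 1" and K: "K \<ge> 0" and b0: "\<And>i. 0 \<le> b i" and bK: "\<And>i. b i \<le> K * real (Suc i)"
  shows "(\<Sum>i. ennreal (b i powr q) * ennreal ((1/2) ^ i)) \<le> ennreal ((24 * K * q) powr q)"
proof -
  define A where "A = K powr q * (4 * q) powr q * (3/2)"
  have A0: "A \<ge> 0" unfolding A_def by simp
  have tb: "b i powr q * (1/2) ^ i \<le> A * (3/4) ^ i" for i
  proof -
    have "b i powr q \<le> (K * real (Suc i)) powr q" using b0 bK q by (intro powr_mono2) auto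
    also have "\<dots> = K powr q * real (Suc i) powr q" using K by (simp add: powr_mult)
    also have "\<dots> \<le> K powr q * ((4 * q) powr q * (3/2) ^ Suc i)"
      using term_bound[OF q, of "Suc i"] by (intro mult_left_mono) auto
    finally have "b i powr q * (1/2) ^ i \<le> K powr q * ((4 * q) powr q * (3/2) ^ Suc i) * (1/2) ^ i"
      by (intro mult_right_mono) auto
    also have "\<dots> = A * ((3/2) ^ i * (1/2) ^ i)" unfolding A_def by (simp add: ac_simps)
    also have "(3/2::real) ^ i * (1/2) ^ i = (3/4) ^ i" by (simp add: power_mult_distrib[symmetric])
    finally show ?thesis .
  qed
  have "(\<Sum>i. ennreal (b i powr q) * ennreal ((1/2) ^ i)) \<le> (\<Sum>i. ennreal (A * (3/4) ^ i))"
  proof (intro suminf_le summableI)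
    fix i
    have "ennreal (b i powr q) * ennreal ((1/2) ^ i) = ennreal (b i powr q * (1/2) ^ i)"
      by (simp add: ennreal_mult)
    also have "\<dots> \<le> ennreal (A * (3/4) ^ i)" using tb by (rule ennreal_leI)
    finally show "ennreal (b i powr q) * ennreal ((1/2) ^ i) \<le> ennreal (A * (3/4) ^ i)" .
  qed
  also have "\<dots> = ennreal (\<Sum>i. A * (3/4) ^ i)"
    using A0 by (intro suminf_ennreal2) (auto intro: summable_mult summable_geometric)
  also have "(\<Sum>i. A * (3/4::real) ^ i) = A * 4"
  proof -
    have "(\<Sum>i. A * (3/4::real) ^ i) = A * (\<Sum>i. (3/4::real) ^ i)"
      by (rule suminf_mult) (rule summable_geometric, simp)
    also have "(\<Sum>i. (3/4::real) ^ i) = 4" by (subst suminf_geometric) auto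
    finally show ?thesis .
  qed
  also have "A * 4 \<le> (24 * K * q) powr q"
  proof -
    have "A * 4 = 6 * (K powr q * (4 * q) powr q)" unfolding A_def by simp
    also have "(6::real) \<le> 6 powr q" using powr_mono[of 1 q 6] q by simp
    then have "6 * (K powr q * (4 * q) powr q) \<le> 6 powr q * (K powr q * (4 * q) powr q)"
      by (intro mult_right_mono) auto
    also have "\<dots> = (24 * K * q) powr q" using K q by (simp add: powr_mult[symmetric] mult.assoc)
    finally show ?thesis .
  qed
  finally show ?thesis by (simp add: ennreal_leI)
qed

lemma div_le_ennreal: "(A::ennreal) \<le> c * M \<Longrightarrow> A / M \<le> c"
proof (cases "M = 0")
  case True
  assume "A \<le> c * M"
  then have "A = 0" using True by simp
  then show ?thesis by simp
next
  case M0: False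
  assume A: "A \<le> c * M"
  show ?thesis
  proof (cases "M = top")
    case True then show ?thesis by simp
  next
    case False
    have "A / M \<le> (c * M) / M" using A by (simp add: divide_right_mono_ennreal)
    also have "\<dots> = c" using M0 False by (rule ennreal_mult_divide_eq)
    finally show ?thesis .
  qed
qed

lemma gamma_ge_1:
  assumes hyp: "\<forall>R (g :: real ^ 'n::finite \<Rightarrow> complex) x. R \<in> cubes \<longrightarrow> set_integrable lborel R g \<longrightarrow> x \<in> R \<longrightarrow>
          ennreal (norm (proj k R g x)) \<le> ennreal \<gamma> * avg R g"
  shows "1 \<le> \<gamma>"
proof -
  let ?Q = "C (0::real^'n) 1 rho0"
  have Q: "?Q \<in> cubes" by (rule C_cube) simp
  have cQ: "compact ?Q" "interior ?Q \<noteq> {}" using Q cube_compact cube_interior by auto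
  have one: "(\<lambda>_. 1::complex) \<in> polys k" by (rule polys_const)
  have si: "set_integrable lborel ?Q (\<lambda>_. 1::complex)" by (rule poly_set_integrable[OF one Q])
  have "pspec k ?Q (\<lambda>_. 1) (\<lambda>_. 1)" unfolding pspec_def using one by simp
  then have pr: "proj k ?Q (\<lambda>_. 1) = (\<lambda>_. 1)" by (rule proj_eq[OF cQ si])
  obtain x where x: "x \<in> ?Q" using cQ(2) interior_subset by blast
  have "avg ?Q (\<lambda>_. 1::complex) = Ii (\<lambda>_. 1) ?Q * ennreal (1 / vol 1 (rho0::'n idx))" by (rule avg_C) simp
  also have "Ii (\<lambda>_. 1::complex) ?Q = ennreal (vol 1 (rho0::'n idx))"
    unfolding Ii_def using cube_sets[OF Q] by (simp add: emeasure_C)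
  also have "ennreal (vol 1 (rho0::'n idx)) * ennreal (1 / vol 1 (rho0::'n idx)) = 1"
    using times_inv_vol[of 1 "rho0::'n idx"] by (simp add: mult.commute)
  finally have a1: "avg ?Q (\<lambda>_. 1::complex) = 1" .
  have "ennreal 1 \<le> ennreal \<gamma>" using hyp Q si x pr a1 by force
  show ?thesis
  proof (rule ccontr)
    assume "\<not> 1 \<le> \<gamma>"
    then have "ennreal \<gamma> < ennreal 1" by (intro ennreal_lessI) auto
    then show False using \<open>ennreal 1 \<le> ennreal \<gamma>\<close> by simp
  qed
qed

lemma Gs_0: "Gs k a h f 0 = cbox a (a + h *\<^sub>R One)"
  unfolding Gs_def gn_def by (simp add: Q_C)

lemma term_le_suminf: "(g::nat \<Rightarrow> ennreal) i \<le> (\<Sum>n. g n)"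
  using sum_le_suminf[OF summableI, of "{i}" g] by simp

lemma point_major:
  fixes a :: "real^'n::finite"
  assumes h: "h > 0" and f: "loc_integrable f"
    and hyp: "\<forall>R (g :: real ^ 'n \<Rightarrow> complex) x. R \<in> cubes \<longrightarrow> set_integrable lborel R g \<longrightarrow> x \<in> R \<longrightarrow>
          ennreal (norm (proj k R g x)) \<le> ennreal \<gamma> * avg R g"
    and g1: "1 \<le> \<gamma>" and q: "q > 0" and p: "p > 0" and al: "\<alpha> > 0" and qa: "q * \<alpha> = p"
    and x: "x \<in> cbox a (a + h *\<^sub>R One)"
  shows "epowr (dyadic_max (cbox a (a + h *\<^sub>R One)) (\<lambda>y. f y - proj k (cbox a (a + h *\<^sub>R One)) f y) x / sharp_max k f x) p * ennreal wx
    \<le> epowr (\<Sum>i. ennreal ((2 + real i * \<gamma> * 2 ^ CARD('n) * 2) powr q) * indicator (Gs k a h f i) x) \<alpha> * ennreal wx"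
proof -
  define b where "b = (\<lambda>i::nat. 2 + real i * \<gamma> * 2 ^ CARD('n) * 2)"
  let ?Q = "cbox a (a + h *\<^sub>R One)"
  let ?F = "dyadic_max ?Q (\<lambda>y. f y - proj k ?Q f y) x / sharp_max k f x"
  let ?\<Psi> = "\<Sum>i. ennreal (b i powr q) * indicator (Gs k a h f i) x"
  have b2: "b i \<ge> 2" for i unfolding b_def using g1 by simp
  show ?thesis
  proof (cases "\<exists>i. x \<notin> Gs k a h f (Suc i)")
    case True
    define i where "i = (LEAST i. x \<notin> Gs k a h f (Suc i))"
    have xi: "x \<notin> Gs k a h f (Suc i)" unfolding i_def using True by (rule LeastI_ex)
    have xin: "x \<in> Gs k a h f i"
    proof (cases i)
      case 0 then show ?thesis using x by (simp only: Gs_0)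
    next
      case (Suc j)
      then have "j < i" by simp
      then show ?thesis using not_less_Least[of j "\<lambda>i. x \<notin> Gs k a h f (Suc i)"] Suc unfolding i_def by auto
    qed
    have eb: "ennreal (b i) = 2 + of_nat i * (ennreal \<gamma> * 2 ^ CARD('n) * 2)"
      using g1 unfolding b_def
      by (simp add: ennreal_mult'' ennreal_power[symmetric] ennreal_of_nat_eq_real_of_nat[symmetric] ac_simps)
    have "?F \<le> ennreal (b i)"
      by (rule div_le_ennreal) (use dmax_bound[OF h f hyp xi] eb in simp)
    then have "epowr ?F p \<le> epowr (ennreal (b i)) p" using p by (intro epowr_mono) auto
    also have "\<dots> = epowr (ennreal (b i powr q)) \<alpha>"
      using b2[of i] qa by (simp add: epowr_ennreal powr_powr)
    also have "\<dots> \<le> epowr ?\<Psi> \<alpha>"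
    proof (rule epowr_mono)
      have "ennreal (b i powr q) = ennreal (b i powr q) * indicator (Gs k a h f i) x" using xin by simp
      also have "\<dots> \<le> ?\<Psi>" by (rule term_le_suminf)
      finally show "ennreal (b i powr q) \<le> ?\<Psi>" .
    qed (use al in simp)
    finally have fin: "epowr ?F p \<le> epowr ?\<Psi> \<alpha>" .
    show ?thesis using mult_right_mono[OF fin, of "ennreal wx"] unfolding b_def by simp
  next
    case False
    then have allin: "x \<in> Gs k a h f (Suc i)" for i by blast
    have "?\<Psi> = top"
    proof (rule ccontr)
      assume "?\<Psi> \<noteq> top"
      then obtain t where t: "?\<Psi> = ennreal t" "0 \<le> t" by (cases ?\<Psi>) auto
      obtain N :: nat where N: "t < real N" using reals_Archimedean2 by blast
      have "of_nat N = (\<Sum>n\<in>{Suc 0..N}. (1::ennreal))" by simp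
      also have "\<dots> \<le> (\<Sum>n\<in>{Suc 0..N}. ennreal (b n powr q) * indicator (Gs k a h f n) x)"
      proof (intro sum_mono)
        fix n assume n: "n \<in> {Suc 0..N}"
        then obtain m where m: "n = Suc m" by (cases n) auto
        have "1 \<le> b n powr q" using b2[of n] q by (intro ge_one_powr_ge_zero) auto
        then show "(1::ennreal) \<le> ennreal (b n powr q) * indicator (Gs k a h f n) x"
          using allin[of m] m by simp
      qed
      also have "\<dots> \<le> ?\<Psi>" by (rule sum_le_suminf[OF summableI]) auto
      finally have "ennreal (real N) \<le> ennreal t" using t by (simp add: ennreal_of_nat_eq_real_of_nat)
      then have "real N \<le> t" using ennreal_le_iff[OF t(2)] by blast
      then show False using N by simp
    qed
    have "epowr ?F p * ennreal wx \<le> epowr ?\<Psi> \<alpha> * ennreal wx"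
    proof (cases "ennreal wx = 0")
      case True then show ?thesis by simp
    next
      case False
      have "epowr ?\<Psi> \<alpha> * ennreal wx = top" using \<open>?\<Psi> = top\<close> False by (simp add: ennreal_top_mult)
      then show ?thesis by simp
    qed
    then show ?thesis unfolding b_def by simp
  qed
qed

lemma Sm_le:
  fixes a :: "real^'n::finite"
  assumes h: "h > 0" and f: "loc_integrable f"
  shows "Sm k a h f i \<le> ennreal (h ^ CARD('n) * (1/2) ^ i)"
proof -
  have "Sm k a h f i = ennreal ((1/2) ^ i) * (2 ^ i * Sm k a h f i)"
  proof -
    have e2: "(2::ennreal) ^ i = ennreal (2 ^ i)" using ennreal_power[of 2 i] by simp
    have "ennreal ((1/2) ^ i) * ennreal (2 ^ i) = ennreal ((1/2) ^ i * 2 ^ i)"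
      by (rule ennreal_mult[symmetric]) auto
    also have "(1/2::real) ^ i * 2 ^ i = 1" by (simp add: power_mult_distrib[symmetric])
    finally have "ennreal ((1/2) ^ i) * 2 ^ i = 1" unfolding e2 by simp
    then show ?thesis by (simp add: mult.assoc[symmetric])
  qed
  also have "\<dots> \<le> ennreal ((1/2) ^ i) * ennreal (h ^ CARD('n))"
    using Sm_bound[OF h f] by (rule mult_left_mono) simp
  also have "\<dots> = ennreal (h ^ CARD('n) * (1/2) ^ i)"
    using h by (subst ennreal_mult[symmetric]) (auto simp: mult.commute)
  finally show ?thesis .
qed

lemma int_Psi:
  fixes a :: "real^'n::finite"
  assumes h: "h > 0" and f: "loc_integrable f" and g1: "1 \<le> \<gamma>" and q: "q \<ge> 1"
  shows "(\<integral>\<^sup>+x. (\<Sum>i. ennreal ((2 + real i * \<gamma> * 2 ^ CARD('n) * 2) powr q) * indicator (Gs k a h f i) x) * indicator Q x \<partial>lborel)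
    \<le> ennreal (h ^ CARD('n)) * ennreal ((24 * (2 ^ (CARD('n) + 2) * \<gamma>) * q) powr q)"
proof -
  define b where "b = (\<lambda>i::nat. 2 + real i * \<gamma> * 2 ^ CARD('n) * 2)"
  define K where "K = 2 ^ (CARD('n) + 2) * \<gamma>"
  have Gm[measurable]: "Gs k a h f i \<in> sets borel" for i using Gs_sets by simp
  have "(\<integral>\<^sup>+x. (\<Sum>i. ennreal (b i powr q) * indicator (Gs k a h f i) x) * indicator Q x \<partial>lborel)
      \<le> (\<integral>\<^sup>+x. (\<Sum>i. ennreal (b i powr q) * indicator (Gs k a h f i) x) \<partial>lborel)"
    by (intro nn_integral_mono) (auto simp: indicator_def)
  also have "\<dots> = (\<Sum>i. \<integral>\<^sup>+x. ennreal (b i powr q) * indicator (Gs k a h f i) x \<partial>lborel)"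
    by (rule nn_integral_suminf) measurable
  also have "\<dots> = (\<Sum>i. ennreal (b i powr q) * emeasure lborel (Gs k a h f i))"
    using Gs_sets by (simp add: nn_integral_cmult_indicator)
  also have "\<dots> \<le> (\<Sum>i. ennreal (h ^ CARD('n)) * (ennreal (b i powr q) * ennreal ((1/2) ^ i)))"
  proof (intro suminf_le summableI)
    fix i
    have "emeasure lborel (Gs k a h f i) \<le> ennreal (h ^ CARD('n) * (1/2) ^ i)"
      using Gs_measure[OF h] Sm_le[OF h f] order_trans by blast
    then have "ennreal (b i powr q) * emeasure lborel (Gs k a h f i) \<le> ennreal (b i powr q) * ennreal (h ^ CARD('n) * (1/2) ^ i)"
      by (rule mult_left_mono) simp
    also have "\<dots> = ennreal (h ^ CARD('n)) * (ennreal (b i powr q) * ennreal ((1/2) ^ i))"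
    proof -
      have "ennreal (h ^ CARD('n) * (1/2) ^ i) = ennreal (h ^ CARD('n)) * ennreal ((1/2) ^ i)"
        by (rule ennreal_mult) (use h in auto)
      then show ?thesis by (simp only: mult.left_commute)
    qed
    finally show "ennreal (b i powr q) * emeasure lborel (Gs k a h f i) \<le> ennreal (h ^ CARD('n)) * (ennreal (b i powr q) * ennreal ((1/2) ^ i))" .
  qed
  also have "\<dots> = ennreal (h ^ CARD('n)) * (\<Sum>i. ennreal (b i powr q) * ennreal ((1/2) ^ i))"
    by (rule ennreal_suminf_cmult)
  also have "\<dots> \<le> ennreal (h ^ CARD('n)) * ennreal ((24 * K * q) powr q)"
  proof (intro mult_left_mono series_bound[OF q])
    show "0 \<le> K" unfolding K_def using g1 by simp
    fix i
    show "0 \<le> b i" unfolding b_def using g1 by simp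
    have "b i = 2 + real i * (\<gamma> * 2 ^ CARD('n) * 2)" unfolding b_def by (simp add: ac_simps)
    also have "\<dots> \<le> K + real i * K"
    proof (intro add_mono mult_left_mono)
      have "(2::real) ^ 1 \<le> 2 ^ (CARD('n) + 2)" by (rule power_increasing) auto
      then have "(2::real) \<le> 2 ^ (CARD('n) + 2)" by simp
      also have "\<dots> \<le> 2 ^ (CARD('n) + 2) * \<gamma>" using g1 by simp
      finally show "2 \<le> K" unfolding K_def .
      have "\<gamma> * 2 ^ CARD('n) * 2 \<le> \<gamma> * 2 ^ CARD('n) * 4" using g1 by simp
      then show "\<gamma> * 2 ^ CARD('n) * 2 \<le> K" unfolding K_def by (simp add: power_add ac_simps)
    qed simp
    also have "\<dots> = K * real (Suc i)" by (simp add: algebra_simps)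
    finally show "b i \<le> K * real (Suc i)" .
  qed simp
  finally show ?thesis unfolding b_def K_def .
qed

lemma final_arith:
  fixes Vr Wr Xr \<alpha> \<beta> :: real
  assumes V: "Vr > 0" and W: "Wr > 0" and X: "Xr \<ge> 0" and ab: "\<alpha> + \<beta> = 1"
  shows "(Vr * Xr) powr \<alpha> * Wr powr \<beta> / (Vr * (Wr / Vr) powr \<beta>) = Xr powr \<alpha>"
proof -
  have "Vr = Vr powr \<alpha> * Vr powr \<beta>" using V ab by (simp add: powr_add[symmetric])
  then have "Vr * (Wr / Vr) powr \<beta> = Vr powr \<alpha> * Wr powr \<beta>"
    using V W by (simp add: powr_divide field_simps)
  moreover have "(Vr * Xr) powr \<alpha> = Vr powr \<alpha> * Xr powr \<alpha>" using V X by (simp add: powr_mult)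
  ultimately show ?thesis using V W by simp
qed

theorem theorem7p1:
  "\<exists>c::real. c > 0 \<and>
    (\<forall>(k::nat) (\<gamma>::real).
      (\<forall>R (g :: real ^ 'n \<Rightarrow> complex) x. R \<in> cubes \<longrightarrow> set_integrable lborel R g \<longrightarrow> x \<in> R \<longrightarrow>
          ennreal (norm (proj k R g x)) \<le> ennreal \<gamma> * avg R g) \<longrightarrow>
      (\<forall>(w :: real ^ 'n \<Rightarrow> real) (f :: real ^ 'n \<Rightarrow> complex) Q (r::real) (p::real).
         weight w \<longrightarrow> loc_integrable f \<longrightarrow> Q \<in> cubes \<longrightarrow> 1 < r \<longrightarrow> 1 \<le> p \<longrightarrow>
         epowr (inverse (w_r r w Q) *
                 (\<integral>\<^sup>+ x\<in>Q. epowr (dyadic_max Q (\<lambda>y. f y - proj k Q f y) x / sharp_max k f x) p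
                              * ennreal (w x) \<partial>lborel)) (1 / p)
           \<le> ennreal (c * (r / (r - 1)) * \<gamma> * p)))"
proof (intro exI[of _ "24 * 2 ^ (CARD('n) + 2)"] conjI allI impI)
  show "(0::real) < 24 * 2 ^ (CARD('n) + 2)" by simp
  fix k :: nat and \<gamma> :: real
  assume hyp: "\<forall>R (g :: real ^ 'n \<Rightarrow> complex) x. R \<in> cubes \<longrightarrow> set_integrable lborel R g \<longrightarrow> x \<in> R \<longrightarrow>
          ennreal (norm (proj k R g x)) \<le> ennreal \<gamma> * avg R g"
  fix w :: "real ^ 'n \<Rightarrow> real" and f :: "real ^ 'n \<Rightarrow> complex" and Q :: "(real ^ 'n) set" and r p :: real
  assume wt: "weight w" and f: "loc_integrable f" and Qc: "Q \<in> cubes" and r: "1 < r" and p: "1 \<le> p"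
  obtain a h where Q: "Q = cbox a (a + h *\<^sub>R One)" and h: "h > 0" using Qc unfolding cubes_def by blast
  have g1: "1 \<le> \<gamma>" using gamma_ge_1[OF hyp] .
  have wm[measurable]: "w \<in> borel_measurable lborel" and w0: "\<And>x. 0 \<le> w x" using wt unfolding weight_def by auto
  have Qm[measurable]: "Q \<in> sets borel" using cube_sets[OF Qc] by simp
  define r' where "r' = r / (r - 1)"
  define q where "q = p * r'"
  define \<alpha> where "\<alpha> = (r - 1) / r"
  define \<beta> where "\<beta> = 1 / r"
  define K where "K = 2 ^ (CARD('n) + 2) * \<gamma>"
  define T where "T = 24 * K * q"
  have r'1: "r' \<ge> 1" unfolding r'_def using r by (simp add: field_simps)
  have q1: "q \<ge> 1" unfolding q_def using mult_mono[of 1 p 1 r'] p r'1 by simp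
  have al: "\<alpha> > 0" and be: "\<beta> > 0" using r unfolding \<alpha>_def \<beta>_def by auto
  have ab: "\<alpha> + \<beta> = 1" using r unfolding \<alpha>_def \<beta>_def by (simp add: field_simps)
  have qa: "q * \<alpha> = p" using r unfolding q_def r'_def \<alpha>_def by (simp add: field_simps)
  have ib: "1 / \<beta> = r" unfolding \<beta>_def by simp
  have T0: "T \<ge> 0" unfolding T_def K_def using g1 q1 by simp
  have Teq: "T = 24 * 2 ^ (CARD('n) + 2) * (r / (r - 1)) * \<gamma> * p"
    unfolding T_def K_def q_def r'_def by (simp add: ac_simps)
  define \<Psi> where "\<Psi> = (\<lambda>x. (\<Sum>i. ennreal ((2 + real i * \<gamma> * 2 ^ CARD('n) * 2) powr q) * indicator (Gs k a h f i) x))"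
  have Psim[measurable]: "\<Psi> \<in> borel_measurable lborel"
  proof -
    have Gm[measurable]: "Gs k a h f i \<in> sets borel" for i using Gs_sets by simp
    show ?thesis unfolding \<Psi>_def by measurable
  qed
  define I where "I = (\<integral>\<^sup>+ x\<in>Q. epowr (dyadic_max Q (\<lambda>y. f y - proj k Q f y) x / sharp_max k f x) p * ennreal (w x) \<partial>lborel)"
  define W where "W = (\<integral>\<^sup>+ x\<in>Q. ennreal (w x powr r) \<partial>lborel)"
  define V where "V = ennreal (h ^ CARD('n))"
  define X where "X = ennreal (T powr q)"
  have I1: "I \<le> (\<integral>\<^sup>+x. epowr (\<Psi> x * indicator Q x) \<alpha> * ennreal (w x * indicator Q x) \<partial>lborel)"
    unfolding I_def
  proof (intro nn_integral_mono)
    fix x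
    show "epowr (dyadic_max Q (\<lambda>y. f y - proj k Q f y) x / sharp_max k f x) p * ennreal (w x) * indicator Q x
        \<le> epowr (\<Psi> x * indicator Q x) \<alpha> * ennreal (w x * indicator Q x)"
    proof (cases "x \<in> Q")
      case True
      have "x \<in> cbox a (a + h *\<^sub>R One)" using True Q by simp
      from point_major[OF h f hyp g1 _ _ al qa this, of "w x"] q1 p
      show ?thesis using True unfolding Q \<Psi>_def by simp
    qed simp
  qed
  also have "\<dots> \<le> epowr (\<integral>\<^sup>+x. \<Psi> x * indicator Q x \<partial>lborel) \<alpha> * epowr (\<integral>\<^sup>+x. ennreal ((w x * indicator Q x) powr (1 / \<beta>)) \<partial>lborel) \<beta>"
    by (rule holder) (auto simp: w0 al be ab)
  also have "(\<integral>\<^sup>+x. ennreal ((w x * indicator Q x) powr (1 / \<beta>)) \<partial>lborel) = W"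
    unfolding W_def ib by (intro nn_integral_cong) (auto simp: indicator_def)
  finally have I1': "I \<le> epowr (\<integral>\<^sup>+x. \<Psi> x * indicator Q x \<partial>lborel) \<alpha> * epowr W \<beta>" .
  have "(\<integral>\<^sup>+x. \<Psi> x * indicator Q x \<partial>lborel) \<le> V * X"
    unfolding \<Psi>_def V_def X_def T_def K_def using int_Psi[OF h f g1 q1] by simp
  then have "epowr (\<integral>\<^sup>+x. \<Psi> x * indicator Q x \<partial>lborel) \<alpha> \<le> epowr (V * X) \<alpha>"
    using al by (intro epowr_mono) auto
  then have "epowr (\<integral>\<^sup>+x. \<Psi> x * indicator Q x \<partial>lborel) \<alpha> * epowr W \<beta> \<le> epowr (V * X) \<alpha> * epowr W \<beta>"
    by (rule mult_right_mono) simp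
  with I1' have I2: "I \<le> epowr (V * X) \<alpha> * epowr W \<beta>" by (rule order_trans)
  have EQ: "emeasure lborel Q = V"
    unfolding V_def Q Q_C[symmetric] using emeasure_C[OF h, of a "rho0 :: 'n idx"] by (simp add: vol_def)
  have wr: "w_r r w Q = V * epowr (W / V) \<beta>"
    unfolding w_r_def EQ W_def \<beta>_def ..
  have Vpos: "h ^ CARD('n) > 0" using h by simp
  have main: "inverse (w_r r w Q) * I \<le> ennreal (T powr p)"
  proof (cases "W = top")
    case True
    have "W / V = top" using True by (simp add: ennreal_top_divide V_def)
    then have "w_r r w Q = top" using wr Vpos h by (simp add: V_def ennreal_mult_top)
    then show ?thesis by simp
  next
    case Wt: False
    show ?thesis
    proof (cases "W = 0")
      case True
      then have "I = 0" using I2 be by simp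
      then show ?thesis by simp
    next
      case W0: False
      obtain Wr where Wr: "W = ennreal Wr" "Wr > 0" using Wt W0 by (cases W) auto
      have wr2: "w_r r w Q = ennreal (h ^ CARD('n) * (Wr / h ^ CARD('n)) powr \<beta>)"
        unfolding wr V_def Wr(1) using Wr Vpos by (simp add: divide_ennreal epowr_ennreal ennreal_mult)
      then have iw: "inverse (w_r r w Q) = ennreal (1 / (h ^ CARD('n) * (Wr / h ^ CARD('n)) powr \<beta>))"
      proof -
        have pos: "0 < h ^ CARD('n) * (Wr / h ^ CARD('n)) powr \<beta>" using Wr Vpos h by (intro mult_pos_pos) auto
        show ?thesis using wr2 inverse_ennreal[OF pos] by (simp add: inverse_eq_divide)
      qed
      have "V * X = ennreal (h ^ CARD('n) * T powr q)"
        unfolding V_def X_def by (rule ennreal_mult[symmetric]) (use Vpos in auto)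
      then have "epowr (V * X) \<alpha> = ennreal ((h ^ CARD('n) * T powr q) powr \<alpha>)"
        using Vpos by (simp add: epowr_ennreal)
      moreover have "epowr W \<beta> = ennreal (Wr powr \<beta>)" unfolding Wr(1) using Wr by (simp add: epowr_ennreal)
      ultimately have "epowr (V * X) \<alpha> * epowr W \<beta> = ennreal ((h ^ CARD('n) * T powr q) powr \<alpha> * Wr powr \<beta>)"
        by (simp add: ennreal_mult)
      then have "I \<le> ennreal ((h ^ CARD('n) * T powr q) powr \<alpha> * Wr powr \<beta>)"
        using I2 by simp
      then have "inverse (w_r r w Q) * I \<le> ennreal (1 / (h ^ CARD('n) * (Wr / h ^ CARD('n)) powr \<beta>)) * ennreal ((h ^ CARD('n) * T powr q) powr \<alpha> * Wr powr \<beta>)"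
        unfolding iw by (rule mult_left_mono) simp
      also have "\<dots> = ennreal (1 / (h ^ CARD('n) * (Wr / h ^ CARD('n)) powr \<beta>) * ((h ^ CARD('n) * T powr q) powr \<alpha> * Wr powr \<beta>))"
        by (rule ennreal_mult[symmetric]) (use Vpos Wr in auto)
      also have "1 / (h ^ CARD('n) * (Wr / h ^ CARD('n)) powr \<beta>) * ((h ^ CARD('n) * T powr q) powr \<alpha> * Wr powr \<beta>)
          = (h ^ CARD('n) * T powr q) powr \<alpha> * Wr powr \<beta> / (h ^ CARD('n) * (Wr / h ^ CARD('n)) powr \<beta>)" by simp
      also have "\<dots> = ennreal ((T powr q) powr \<alpha>)"
        using final_arith[OF Vpos Wr(2) _ ab, of "T powr q"] by simp
      also have "(T powr q) powr \<alpha> = T powr p" using qa by (simp add: powr_powr)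
      finally show ?thesis .
    qed
  qed
  have "epowr (inverse (w_r r w Q) * I) (1 / p) \<le> epowr (ennreal (T powr p)) (1 / p)"
    using main p by (intro epowr_mono) auto
  also have "\<dots> = ennreal T" using T0 p by (simp add: epowr_ennreal powr_powr)
  finally show "epowr (inverse (w_r r w Q) * (\<integral>\<^sup>+ x\<in>Q. epowr (dyadic_max Q (\<lambda>y. f y - proj k Q f y) x / sharp_max k f x) p * ennreal (w x) \<partial>lborel)) (1 / p)
      \<le> ennreal (24 * 2 ^ (CARD('n) + 2) * (r / (r - 1)) * \<gamma> * p)"
    unfolding I_def Teq .
qed

end
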